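(* Let $f\colon\mathbb S^2\to\mathbb C$ be defined by $$f(\xi)=\ln\Big(\ln\frac{8}{\sqrt{1-\xi_3^2}}\Big)\ \text{ if }|\xi_3|\ne1,\qquad f(\xi)=0\ \text{ otherwise}.$$ Then $f\in H^1(\mathbb S^2)$, but its DFS function satisfies $\tilde f\notin H^1(\mathbb T^2)$.
   Context: $\mathbb T^2=\mathbb R^2/(2\pi\mathbb Z^2)$, functions identified with $2\pi$-biperiodic functions on $\mathbb R^2$. For locally integrable $f,g\colon\mathbb R^2\to\mathbb C$ and $\beta\in\mathbb N_0^2$, $g$ is the weak derivative $D^\beta f$ if $\int f\,D^\beta u=(-1)^{|\beta|}\int g\,u$ for all $u\in C_c^\infty(\mathbb R^2)$. $H^1(\mathbb T^2)$ is the set of $f\in L_2(\mathbb T^2)$ whose weak derivatives $D^\beta f$, $|\beta|\le1$, exist and lie in $L_2(\mathbb T^2)$, with norm $\|f\|_{H^1(\mathbb T^2)}^2=\sum_{|\beta|\le1}\|D^\beta f\|^2_{L_2(\mathbb T^2)}$. Sphere: $L_2(\mathbb S^2)$ with respect to surface measure, $\int_{\mathbb S^2}f\,d\xi=\int_{-\pi}^\pi\int_0^\pi f(\phi(\lambda,\theta))\sin\theta\,d\theta\,d\lambda$. For $f\colon\mathbb S^2\to\mathbb C$ its radial extension is $f^\star(x)=f(x/\|x\|)$, $x\in\mathbb R^3\setminus\{0\}$, and if $f^\star$ is differentiable the surface gradient is $\nabla^\star f(x)=\nabla f^\star(x)$, $x\in\mathbb S^2$. $H^0(\mathbb S^2):=L_2(\mathbb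 S^2)$; for $f\in\mathcal C^1(\mathbb S^2)$ (continuously differentiable on the sphere, i.e. having a $C^1$ extension to an open neighbourhood), $\|f\|_{H^1(\mathbb S^2)}^2:=\sum_{i=1}^3\|(\nabla^\star f)_i\|^2_{L_2(\mathbb S^2)}+\tfrac14\|f\|^2_{L_2(\mathbb S^2)}$, and $H^1(\mathbb S^2)$ is the completion (closure) of $\{f\in\mathcal C^1(\mathbb S^2):\|f\|_{H^1(\mathbb S^2)}<\infty\}$ in this norm, realized as a subspace of $L_2(\mathbb S^2)$. DFS function: $\tilde f=f\circ\phi$ with $\phi(\lambda,\theta)=(\cos\lambda\sin\theta,\sin\lambda\sin\theta,\cos\theta)$. *)

theory Defs
  imports "HOL-Analysis.Analysis"
begin

section \<open>Torus T^2 = R^2/(2 pi Z^2): functions are 2pi-biperiodic functions on R x R\<close>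

definition biperiodic :: "(real \<times> real \<Rightarrow> complex) \<Rightarrow> bool" where
  "biperiodic f \<longleftrightarrow> (\<forall>x y. f (x + 2*pi, y) = f (x, y) \<and> f (x, y + 2*pi) = f (x, y))"

definition torus_L2 :: "(real \<times> real \<Rightarrow> complex) \<Rightarrow> bool" where
  "torus_L2 f \<longleftrightarrow> f \<in> borel_measurable lborel \<and>
     set_integrable lborel ({-pi..pi} \<times> {-pi..pi}) (\<lambda>p. (cmod (f p))\<^sup>2)"

definition locally_integrable2 :: "(real \<times> real \<Rightarrow> complex) \<Rightarrow> bool" where
  "locally_integrable2 f \<longleftrightarrow> (\<forall>K. compact K \<longrightarrow> set_integrable lborel K f)"

definition pd1 :: "(real \<times> real \<Rightarrow> complex) \<Rightarrow> real \<times> real \<Rightarrow> complex" where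
  "pd1 u p = vector_derivative (\<lambda>t. u (t, snd p)) (at (fst p))"

definition pd2 :: "(real \<times> real \<Rightarrow> complex) \<Rightarrow> real \<times> real \<Rightarrow> complex" where
  "pd2 u p = vector_derivative (\<lambda>t. u (fst p, t)) (at (snd p))"

text \<open>C^infinity: all iterated partial derivatives exist and are continuous
  (greatest fixed point formulation)\<close>
definition smooth2 :: "(real \<times> real \<Rightarrow> complex) \<Rightarrow> bool" where
  "smooth2 u \<longleftrightarrow> (\<exists>S. u \<in> S \<and> (\<forall>v\<in>S. continuous_on UNIV v \<and>
      (\<forall>x y. (\<lambda>t. v (t, y)) differentiable (at x) \<and> (\<lambda>t. v (x, t)) differentiable (at y)) \<and>
      pd1 v \<in> S \<and> pd2 v \<in> S))"

definition test_fun :: "(real \<times> real \<Rightarrow> complex) \<Rightarrow> bool" where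
  "test_fun u \<longleftrightarrow> smooth2 u \<and> compact (closure {p. u p \<noteq> 0})"

definition weak_pd1 :: "(real \<times> real \<Rightarrow> complex) \<Rightarrow> (real \<times> real \<Rightarrow> complex) \<Rightarrow> bool" where
  "weak_pd1 f g \<longleftrightarrow> locally_integrable2 f \<and> locally_integrable2 g \<and>
     (\<forall>u. test_fun u \<longrightarrow>
        (LINT p|lborel. f p * pd1 u p) = - (LINT p|lborel. g p * u p))"

definition weak_pd2 :: "(real \<times> real \<Rightarrow> complex) \<Rightarrow> (real \<times> real \<Rightarrow> complex) \<Rightarrow> bool" where
  "weak_pd2 f g \<longleftrightarrow> locally_integrable2 f \<and> locally_integrable2 g \<and>
     (\<forall>u. test_fun u \<longrightarrow>
        (LINT p|lborel. f p * pd2 u p) = - (LINT p|lborel. g p * u p))"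

definition H1_torus :: "(real \<times> real \<Rightarrow> complex) \<Rightarrow> bool" where
  "H1_torus f \<longleftrightarrow> biperiodic f \<and> torus_L2 f \<and>
     (\<exists>g1. weak_pd1 f g1 \<and> torus_L2 g1) \<and> (\<exists>g2. weak_pd2 f g2 \<and> torus_L2 g2)"

definition sph :: "real \<times> real \<Rightarrow> real^3" where
  "sph p = vector [cos (fst p) * sin (snd p), sin (fst p) * sin (snd p), cos (snd p)]"

definition DFS :: "(real^3 \<Rightarrow> complex) \<Rightarrow> real \<times> real \<Rightarrow> complex" where
  "DFS f = f \<circ> sph"

text \<open>f in L2(S^2), surface measure in spherical coordinates\<close>
definition sphere_L2 :: "(real^3 \<Rightarrow> complex) \<Rightarrow> bool" where
  "sphere_L2 f \<longleftrightarrow> set_integrable lborel ({-pi..pi} \<times> {0..pi})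
      (\<lambda>p. (cmod (f (sph p)))\<^sup>2 * sin (snd p))"

definition sphere_L2sq :: "(real^3 \<Rightarrow> complex) \<Rightarrow> real" where
  "sphere_L2sq f = (LINT p:({-pi..pi} \<times> {0..pi})|lborel. (cmod (f (sph p)))\<^sup>2 * sin (snd p))"

definition radial_ext :: "(real^3 \<Rightarrow> complex) \<Rightarrow> real^3 \<Rightarrow> complex" where
  "radial_ext f x = f (x /\<^sub>R norm x)"

text \<open>i-th component of the surface gradient\<close>
definition sgrad :: "(real^3 \<Rightarrow> complex) \<Rightarrow> 3 \<Rightarrow> real^3 \<Rightarrow> complex" where
  "sgrad f i x = frechet_derivative (radial_ext f) (at x) (axis i 1)"

definition C1_sphere :: "(real^3 \<Rightarrow> complex) \<Rightarrow> bool" where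
  "C1_sphere f \<longleftrightarrow> (\<exists>U F F'. open U \<and> sphere 0 1 \<subseteq> U \<and> (\<forall>x\<in>sphere 0 1. F x = f x) \<and>
      (\<forall>x\<in>U. (F has_derivative F' x) (at x)) \<and> (\<forall>v. continuous_on U (\<lambda>x. F' x v)))"

definition H1_sphere_sq :: "(real^3 \<Rightarrow> complex) \<Rightarrow> real" where
  "H1_sphere_sq f = (\<Sum>i\<in>UNIV. sphere_L2sq (sgrad f i)) + 1/4 * sphere_L2sq f"

definition C1_fin :: "(real^3 \<Rightarrow> complex) \<Rightarrow> bool" where
  "C1_fin f \<longleftrightarrow> C1_sphere f \<and> sphere_L2 f \<and> (\<forall>i. sphere_L2 (sgrad f i))"

text \<open>H^1(S^2): closure of C1_fin in the H^1 norm, realized inside L2(S^2)\<close>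
definition H1_sphere :: "(real^3 \<Rightarrow> complex) \<Rightarrow> bool" where
  "H1_sphere f \<longleftrightarrow> sphere_L2 f \<and>
     (\<exists>fs. (\<forall>n. C1_fin (fs n)) \<and>
        (\<forall>e>0. \<exists>N. \<forall>m\<ge>N. \<forall>n\<ge>N. H1_sphere_sq (\<lambda>x. fs m x - fs n x) < e) \<and>
        (\<lambda>n. sphere_L2sq (\<lambda>x. fs n x - f x)) \<longlonglongrightarrow> 0)"

end

theory Submission
  imports Defs "HOL-Computational_Algebra.Polynomial" "HOL-Real_Asymp.Real_Asymp"
begin

definition smooth1 :: "(real \<Rightarrow> real) \<Rightarrow> bool" where
  "smooth1 h \<longleftrightarrow> (\<exists>S. h \<in> S \<and> (\<forall>v\<in>S. (\<forall>x. v differentiable (at x)) \<and> deriv v \<in> S))"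

lemma smooth1I:
  assumes "h \<in> S" "\<And>v. v \<in> S \<Longrightarrow> (\<forall>x. v differentiable (at x)) \<and> deriv v \<in> S"
  shows "smooth1 h"
  using assms unfolding smooth1_def by blast

lemma smooth1_diff: "smooth1 h \<Longrightarrow> h differentiable (at x)"
  unfolding smooth1_def by blast

lemma smooth1_deriv: "smooth1 h \<Longrightarrow> smooth1 (deriv h)"
  unfolding smooth1_def by blast

lemma smooth1_DERIV: "smooth1 h \<Longrightarrow> (h has_real_derivative deriv h x) (at x)"
  using smooth1_diff DERIV_deriv_iff_real_differentiable by blast

lemma smooth1_cont: "smooth1 h \<Longrightarrow> continuous_on A h"
  by (meson continuous_at_imp_continuous_on differentiable_imp_continuous_within smooth1_diff)

lemma smooth1_affine:
  assumes "smooth1 a"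
  shows "smooth1 (\<lambda>x. a (c * x + d))"
proof (rule smooth1I[where S = "{\<lambda>x. k * w (c * x + d) | k w. smooth1 w}"])
  show "(\<lambda>x. a (c * x + d)) \<in> {\<lambda>x. k * w (c * x + d) | k w. smooth1 w}"
    using assms by (intro CollectI exI[of _ 1] exI[of _ a]) auto
next
  fix v assume "v \<in> {\<lambda>x. k * w (c * x + d) | k w. smooth1 w}"
  then obtain k w where v: "v = (\<lambda>x. k * w (c * x + d))" and w: "smooth1 w" by blast
  have D: "(v has_real_derivative k * (deriv w (c * x + d) * c)) (at x)" for x
    unfolding v
    by (intro DERIV_cmult DERIV_chain2[OF smooth1_DERIV[OF w]] derivative_eq_intros) auto
  have "deriv v = (\<lambda>x. (k * c) * deriv w (c * x + d))"
    using DERIV_imp_deriv[OF D] by (auto simp: algebra_simps)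
  then show "(\<forall>x. v differentiable (at x)) \<and> deriv v \<in> {\<lambda>x. k * w (c * x + d) | k w. smooth1 w}"
    using D w smooth1_deriv real_differentiable_def by blast
qed

definition sumprod :: "((real \<Rightarrow> real) \<times> (real \<Rightarrow> real)) list \<Rightarrow> real \<Rightarrow> real" where
  "sumprod ps x = (\<Sum>(a,b)\<leftarrow>ps. a x * b x)"

definition dps :: "((real \<Rightarrow> real) \<times> (real \<Rightarrow> real)) list \<Rightarrow> ((real \<Rightarrow> real) \<times> (real \<Rightarrow> real)) list" where
  "dps ps = concat (map (\<lambda>(a,b). [(deriv a, b), (a, deriv b)]) ps)"

lemma sumprod_DERIV:
  assumes "\<forall>(a,b)\<in>set ps. smooth1 a \<and> smooth1 b"
  shows "(sumprod ps has_real_derivative sumprod (dps ps) x) (at x)"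
  using assms
proof (induction ps)
  case Nil
  then show ?case by (simp add: sumprod_def dps_def)
next
  case (Cons p ps)
  obtain a b where p: "p = (a,b)" by fastforce
  have ab: "smooth1 a" "smooth1 b" using Cons.prems p by auto
  have e1: "sumprod (p # ps) = (\<lambda>x. a x * b x + sumprod ps x)"
    by (auto simp: sumprod_def p)
  have e2: "sumprod (dps (p # ps)) x = deriv a x * b x + a x * deriv b x + sumprod (dps ps) x"
    by (simp add: sumprod_def dps_def p)
  have "((\<lambda>x. a x * b x) has_real_derivative deriv a x * b x + a x * deriv b x) (at x)"
    using DERIV_mult[OF smooth1_DERIV[OF ab(1)] smooth1_DERIV[OF ab(2)], of x] by (simp add: algebra_simps)
  moreover have "(sumprod ps has_real_derivative sumprod (dps ps) x) (at x)"
    using Cons p by auto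
  ultimately show ?case unfolding e1 e2
    by (intro DERIV_add) auto
qed

lemma smooth1_mult:
  assumes "smooth1 a" "smooth1 b"
  shows "smooth1 (\<lambda>x. a x * b x)"
proof (rule smooth1I[where S = "{sumprod ps | ps. \<forall>(a,b)\<in>set ps. smooth1 a \<and> smooth1 b}"])
  show "(\<lambda>x. a x * b x) \<in> {sumprod ps | ps. \<forall>(a,b)\<in>set ps. smooth1 a \<and> smooth1 b}"
    using assms by (intro CollectI exI[of _ "[(a,b)]"]) (auto simp: sumprod_def)
next
  fix v assume "v \<in> {sumprod ps | ps. \<forall>(a,b)\<in>set ps. smooth1 a \<and> smooth1 b}"
  then obtain ps where v: "v = sumprod ps" and ps: "\<forall>(a,b)\<in>set ps. smooth1 a \<and> smooth1 b" by blast
  have "deriv v = sumprod (dps ps)"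
    using DERIV_imp_deriv[OF sumprod_DERIV[OF ps]] v by auto
  moreover have "\<forall>(a,b)\<in>set (dps ps). smooth1 a \<and> smooth1 b"
    using ps by (auto simp: dps_def smooth1_deriv)
  ultimately show "(\<forall>x. v differentiable (at x)) \<and> deriv v \<in> {sumprod ps | ps. \<forall>(a,b)\<in>set ps. smooth1 a \<and> smooth1 b}"
    using sumprod_DERIV[OF ps] v real_differentiable_def by blast
qed

lemma poly_div_exp_0: "((\<lambda>y. poly p y / exp y) \<longlongrightarrow> (0::real)) at_top"
proof -
  have "((\<lambda>y. \<Sum>i\<le>degree p. coeff p i * (y ^ i / exp y)) \<longlongrightarrow> (\<Sum>i\<le>degree p. coeff p i * 0)) at_top"
    by (intro tendsto_sum tendsto_mult tendsto_const tendsto_power_div_exp_0)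
  then show ?thesis
    by (simp add: poly_altdef sum_divide_distrib)
qed

definition Ep :: "real poly \<Rightarrow> real \<Rightarrow> real" where
  "Ep p x = (if 0 < x then poly p (1/x) * exp (-1/x) else 0)"

lemma Ep_DERIV_pos:
  assumes "0 < x"
  shows "(Ep p has_real_derivative Ep ([:0,0,1:] * (p - pderiv p)) x) (at x)"
proof -
  have D: "((\<lambda>x. poly p (1/x) * exp (-1/x)) has_real_derivative
      poly (pderiv p) (1/x) * (-1/x^2) * exp (-1/x) + poly p (1/x) * (exp (-1/x) * (1/x^2))) (at x)"
    using assms
    by (auto intro!: derivative_eq_intros DERIV_chain2[OF poly_DERIV] simp: power2_eq_square field_simps)
  have e: "poly (pderiv p) (1/x) * (-1/x^2) * exp (-1/x) + poly p (1/x) * (exp (-1/x) * (1/x^2))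
     = Ep ([:0,0,1:] * (p - pderiv p)) x"
    using assms by (simp add: Ep_def poly_pCons power2_eq_square field_simps)
  show ?thesis
    apply (rule has_field_derivative_transform_within_open[where S="{0<..}", OF D[unfolded e]])
    using assms by (auto simp: Ep_def)
qed

lemma Ep_DERIV_neg:
  assumes "x < 0"
  shows "(Ep p has_real_derivative Ep q x) (at x)"
proof -
  have "((\<lambda>x. 0) has_real_derivative Ep q x) (at x)" using assms by (simp add: Ep_def)
  then show ?thesis
    apply (rule has_field_derivative_transform_within_open[where S="{..<0}"])
    using assms by (auto simp: Ep_def)
qed

lemma Ep_DERIV_0: "(Ep p has_real_derivative Ep q 0) (at 0)"
proof -
  have "Ep q 0 = 0" by (simp add: Ep_def)
  moreover have "((\<lambda>h. (Ep p (0 + h) - Ep p 0) / h) \<longlongrightarrow> 0) (at 0)"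
    unfolding filterlim_at_split
  proof
    show "((\<lambda>h. (Ep p (0 + h) - Ep p 0) / h) \<longlongrightarrow> 0) (at_left 0)"
      by (rule tendsto_eventually) (auto simp: Ep_def eventually_at_left_field intro: exI[of _ "-1"])
  next
    have lim: "((\<lambda>h. poly ([:0,1:] * p) (inverse h) / exp (inverse h)) \<longlongrightarrow> 0) (at_right 0)"
      by (rule filterlim_compose[OF poly_div_exp_0 filterlim_inverse_at_top_right])
    show "((\<lambda>h. (Ep p (0 + h) - Ep p 0) / h) \<longlongrightarrow> 0) (at_right 0)"
      apply (rule Lim_transform_eventually[OF lim])
      apply (simp add: eventually_at_right_field)
      apply (rule exI[of _ 1])
      apply (auto simp: Ep_def field_simps exp_minus)
      done
  qed
  ultimately show ?thesis by (simp add: DERIV_def)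
qed

lemma Ep_DERIV: "(Ep p has_real_derivative Ep ([:0,0,1:] * (p - pderiv p)) x) (at x)"
  by (metis Ep_DERIV_0 Ep_DERIV_neg Ep_DERIV_pos linorder_neqE_linordered_idom)

lemma smooth1_Ep: "smooth1 (Ep p)"
proof (rule smooth1I[where S="range Ep"])
  fix v assume "v \<in> range Ep"
  then obtain q where v: "v = Ep q" by auto
  have "deriv v = Ep ([:0,0,1:] * (q - pderiv q))"
    using DERIV_imp_deriv[OF Ep_DERIV] v by auto
  then show "(\<forall>x. v differentiable at x) \<and> deriv v \<in> range Ep"
    using Ep_DERIV v real_differentiable_def by blast
qed auto

definition E :: "real \<Rightarrow> real" where "E x = (if 0 < x then exp (-1/x) else 0)"

lemma E_Ep: "E = Ep 1"
  by (auto simp: E_def Ep_def fun_eq_iff)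

lemma smooth1_E: "smooth1 E"
  by (simp add: E_Ep smooth1_Ep)

definition bump :: "real \<Rightarrow> real" where "bump t = E (1 * t + -1) * E ((-1) * t + 2)"

lemma smooth1_bump: "smooth1 bump"
  unfolding bump_def by (intro smooth1_mult smooth1_affine smooth1_E)

lemma E_nonneg: "0 \<le> E x" and E_le1: "E x \<le> 1"
  by (auto simp: E_def)

lemma bump_nonneg: "0 \<le> bump t" and bump_le1: "bump t \<le> 1"
  unfolding bump_def using E_nonneg E_le1 by (auto intro: mult_le_one)

lemma bump_zero: "t \<le> 1 \<or> 2 \<le> t \<Longrightarrow> bump t = 0"
  by (auto simp: bump_def E_def)

lemma bump_lower: assumes "5/4 \<le> t" "t \<le> 7/4" shows "exp (-8) \<le> bump t"
proof -
  have "exp (-4) \<le> E (t - 1)"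
    using assms by (auto simp: E_def field_simps)
  moreover have "exp (-4) \<le> E (2 - t)"
    using assms by (auto simp: E_def field_simps)
  ultimately have "exp (-4) * exp (-4) \<le> E (t - 1) * E (2 - t)"
    by (intro mult_mono) (auto simp: E_nonneg)
  then show ?thesis by (simp add: bump_def exp_add[symmetric])
qed

definition tp :: "(real \<Rightarrow> real) \<Rightarrow> (real \<Rightarrow> real) \<Rightarrow> real \<times> real \<Rightarrow> complex" where
  "tp a b p = complex_of_real (a (fst p) * b (snd p))"

lemma pd1_tp: "smooth1 a \<Longrightarrow> pd1 (tp a b) p = tp (deriv a) b p"
  unfolding pd1_def tp_def fst_conv snd_conv
  by (rule vector_derivative_at, rule has_vector_derivative_of_real, rule DERIV_cmult_right, erule smooth1_DERIV)

lemma pd2_tp: "smooth1 b \<Longrightarrow> pd2 (tp a b) p = tp a (deriv b) p"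
  unfolding pd2_def tp_def fst_conv snd_conv
  by (rule vector_derivative_at, rule has_vector_derivative_of_real, rule DERIV_cmult, erule smooth1_DERIV)

lemma cont_tp: assumes "smooth1 a" "smooth1 b" shows "continuous_on UNIV (tp a b)"
proof -
  have ca: "continuous_on UNIV a" and cb: "continuous_on UNIV b" using assms smooth1_cont by auto
  have "continuous_on UNIV (\<lambda>p::real\<times>real. a (fst p))"
    by (rule continuous_on_compose2[OF ca continuous_on_fst[OF continuous_on_id]]) auto
  moreover have "continuous_on UNIV (\<lambda>p::real\<times>real. b (snd p))"
    by (rule continuous_on_compose2[OF cb continuous_on_snd[OF continuous_on_id]]) auto
  ultimately show ?thesis unfolding tp_def
    by (intro continuous_intros)
qed

lemma smooth2_tp: assumes "smooth1 a" "smooth1 b" shows "smooth2 (tp a b)"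
  unfolding smooth2_def
proof (intro exI[of _ "{tp a b | a b. smooth1 a \<and> smooth1 b}"] conjI ballI)
  show "tp a b \<in> {tp a b | a b. smooth1 a \<and> smooth1 b}" using assms by blast
next
  fix v assume "v \<in> {tp a b | a b. smooth1 a \<and> smooth1 b}"
  then obtain a b where v: "v = tp a b" and ab: "smooth1 a" "smooth1 b" by blast
  show "continuous_on UNIV v" using cont_tp ab v by simp
  show "\<forall>x y. (\<lambda>t. v (t, y)) differentiable at x \<and> (\<lambda>t. v (x, t)) differentiable at y"
  proof (intro allI conjI)
    fix x y
    show "(\<lambda>t. v (t, y)) differentiable at x"
      unfolding v tp_def fst_conv snd_conv
      by (rule differentiableI_vector, rule has_vector_derivative_of_real, rule DERIV_cmult_right, rule smooth1_DERIV[OF ab(1)])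
    show "(\<lambda>t. v (x, t)) differentiable at y"
      unfolding v tp_def fst_conv snd_conv
      by (rule differentiableI_vector, rule has_vector_derivative_of_real, rule DERIV_cmult, rule smooth1_DERIV[OF ab(2)])
  qed
  have "pd1 v = tp (deriv a) b" using pd1_tp[OF ab(1)] v by auto
  then show "pd1 v \<in> {tp a b | a b. smooth1 a \<and> smooth1 b}" using ab smooth1_deriv by blast
  have "pd2 v = tp a (deriv b)" using pd2_tp[OF ab(2)] v by auto
  then show "pd2 v \<in> {tp a b | a b. smooth1 a \<and> smooth1 b}" using ab smooth1_deriv by blast
qed

definition beps :: "real \<Rightarrow> real \<Rightarrow> real" where "beps e t = bump ((1/e) * t + 0)"

lemma smooth1_beps: "smooth1 (beps e)"
  unfolding beps_def[abs_def] by (intro smooth1_affine smooth1_bump)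

lemma beps_zero: "0 < e \<Longrightarrow> t \<notin> {e<..<2*e} \<Longrightarrow> beps e t = 0"
  unfolding beps_def by (rule bump_zero) (auto simp: field_simps)

lemma deriv_beps_zero: assumes "0 < e" "t \<notin> {e..2*e}" shows "deriv (beps e) t = 0"
proof -
  have "((\<lambda>x. 0) has_real_derivative 0) (at t)" by simp
  then have "(beps e has_real_derivative 0) (at t)"
    apply (rule has_field_derivative_transform_within_open[where S="- {e..2*e}"])
    using assms beps_zero by auto
  then show ?thesis by (rule DERIV_imp_deriv)
qed

lemma test_fun_tp: "0 < e \<Longrightarrow> test_fun (tp bump (beps e))"
proof -
  assume e: "0 < e"
  have "{p. tp bump (beps e) p \<noteq> 0} \<subseteq> {1..2} \<times> {e..2*e}"
    using bump_zero beps_zero[OF e] by (force simp: tp_def)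
  then have "closure {p. tp bump (beps e) p \<noteq> 0} \<subseteq> {1..2} \<times> {e..2*e}"
    by (intro closure_minimal) (auto intro: closed_Times)
  moreover have "compact ({1..2::real} \<times> {e..2*e})" by (intro compact_Times compact_Icc)
  ultimately show ?thesis
    unfolding test_fun_def
    using smooth2_tp[OF smooth1_bump smooth1_beps] compact_Int_closed
    by (metis closed_closure inf.absorb_iff2)
qed

lemma prod_integrable:
  fixes a b :: "real \<Rightarrow> real"
  assumes a: "integrable lborel a" and b: "integrable lborel b"
  shows "integrable lborel (\<lambda>p::real\<times>real. a (fst p) * b (snd p))"
    and "(LINT p|lborel. a (fst p) * b (snd p)) = (LINT x|lborel. a x) * (LINT y|lborel. b y)"
proof -

  have am[measurable]: "a \<in> borel_measurable lborel" and bm[measurable]: "b \<in> borel_measurable lborel"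
    using a b by auto
  have I: "integrable (lborel \<Otimes>\<^sub>M lborel) (\<lambda>p::real\<times>real. a (fst p) * b (snd p))"
  proof (rule lborel_pair.Fubini_integrable)
    show "(\<lambda>p::real\<times>real. a (fst p) * b (snd p)) \<in> borel_measurable (lborel \<Otimes>\<^sub>M lborel)"
      by measurable
    have "integrable lborel (\<lambda>x. \<bar>a x\<bar> * (LINT y|lborel. \<bar>b y\<bar>))"
      using a by auto
    then show "integrable lborel (\<lambda>x. LINT y|lborel. norm (a (fst (x, y)) * b (snd (x, y))))"
      by (simp add: abs_mult)
    show "AE x in lborel. integrable lborel (\<lambda>y. a (fst (x, y)) * b (snd (x, y)))"
      using b by auto
  qed
  then show "integrable lborel (\<lambda>p::real\<times>real. a (fst p) * b (snd p))"
    by (simp add: lborel_prod)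
  have "(LINT p|(lborel \<Otimes>\<^sub>M lborel). a (fst p) * b (snd p)) = (LINT x|lborel. LINT y|lborel. a x * b y)"
    using lborel_pair.integral_fst'[OF I] by simp
  also have "\<dots> = (LINT x|lborel. a x) * (LINT y|lborel. b y)"
    by simp
  finally show "(LINT p|lborel. a (fst p) * b (snd p)) = (LINT x|lborel. a x) * (LINT y|lborel. b y)"
    by (simp add: lborel_prod)
qed

lemma compact_support_integral:
  fixes g h :: "real \<Rightarrow> real"
  assumes "continuous_on {l..u} h" "\<And>x. x \<notin> {l..u} \<Longrightarrow> g x = 0" "\<And>x. x \<in> {l..u} \<Longrightarrow> g x = h x"
  shows "integrable lborel g" "(LINT x|lborel. g x) = integral {l..u} h"
proof -
  have g: "g = (\<lambda>x. indicator {l..u} x *\<^sub>R h x)"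
    using assms(2,3) by (auto simp: indicator_def fun_eq_iff)
  have I: "integrable lborel (\<lambda>x. indicator {l..u} x *\<^sub>R h x)"
    by (rule borel_integrable_compact) (auto intro: assms(1))
  then show "integrable lborel g" using g by simp
  have "set_integrable lborel {l..u} h" using I by (simp add: set_integrable_def)
  from set_borel_integral_eq_integral(2)[OF this]
  show "(LINT x|lborel. g x) = integral {l..u} h"
    using g by (simp add: set_lebesgue_integral_def)
qed

lemma tlog_mono:
  fixes a b B C k :: real
  assumes "0 < a" "a \<le> b" "b \<le> B" "0 \<le> k" "k * ln B + k \<le> C"
  shows "a * (C - k * ln a) \<le> b * (C - k * ln b)"
proof (rule DERIV_nonneg_imp_nondecreasing[OF assms(2)])
  fix x assume x: "a \<le> x" "x \<le> b"
  then have x0: "0 < x" using assms by auto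
  have "DERIV (\<lambda>t. t * (C - k * ln t)) x :> 1 * (C - k * ln x) + x * (0 - k * (1/x))"
    using x0 by (intro derivative_eq_intros) auto
  moreover have "0 \<le> 1 * (C - k * ln x) + x * (0 - k * (1/x))"
  proof -
    have "ln x \<le> ln B" using x0 x assms by auto
    then have "k * ln x \<le> k * ln B" using assms by (intro mult_left_mono) auto
    then show ?thesis using x0 assms by (simp add: field_simps)
  qed
  ultimately show "\<exists>y. DERIV (\<lambda>t. t * (C - k * ln t)) x :> y \<and> 0 \<le> y" by blast
qed

lemma cos_ge_half: fixes x :: real assumes "0 \<le> x" "x \<le> 1" shows "1/2 \<le> cos x"
proof -
  have "cos x = 1 - 2 * sin (x/2) ^ 2" using cos_double_sin[of "x/2"] by simp
  moreover have "sin (x/2) \<le> 1/2" using sin_x_le_x[of "x/2"] assms by simp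
  moreover have "0 \<le> sin (x/2)" using assms pi_gt3 by (intro sin_ge_zero) auto
  ultimately have "sin (x/2)^2 \<le> (1/2)^2" by (intro power_mono) auto
  then show ?thesis using \<open>cos x = _\<close> by (simp add: power2_eq_square)
qed

definition G :: "real \<Rightarrow> real" where "G t = ln (ln 8 - ln (sin t))"
definition G' :: "real \<Rightarrow> real" where "G' t = - cos t / (sin t * (ln 8 - ln (sin t)))"

lemma sin_pos_01: fixes t :: real shows "0 < t \<Longrightarrow> t \<le> 1 \<Longrightarrow> 0 < sin t \<and> sin t \<le> 1"
proof -
  assume "0 < t" "t \<le> 1"
  moreover have "t < pi" using \<open>t \<le> 1\<close> pi_gt3 by linarith
  ultimately show ?thesis using sin_gt_zero[of t] by simp
qed

lemma ln8_pos: "0 < ln (8::real)" by simp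

lemma ln8_ge1: "1 \<le> ln (8::real)"
proof -
  have "exp 1 \<le> (8::real)" using exp_le by linarith
  then have "ln (exp 1) \<le> ln (8::real)" by (subst ln_le_cancel_iff) auto
  then show ?thesis by simp
qed

lemma G_DERIV: assumes "0 < t" "t \<le> 1" shows "(G has_real_derivative G' t) (at t)"
proof -
  have s: "0 < sin t" "sin t \<le> 1" using sin_pos_01 assms by auto
  then have "ln (sin t) \<le> 0" by simp
  then have L: "0 < ln 8 - ln (sin t)" using ln8_pos by linarith
  have "(G has_real_derivative (1 / (ln 8 - ln (sin t))) * (0 - (1 / sin t) * cos t)) (at t)"
    unfolding G_def using s L by (intro derivative_eq_intros) auto
  moreover have "(1 / (ln 8 - ln (sin t))) * (0 - (1 / sin t) * cos t) = G' t"
    unfolding G'_def using s L by (simp add: field_simps)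
  ultimately show ?thesis by simp
qed

lemma negG'_lower:
  assumes e: "0 < e" "2 * e \<le> 1" and t: "e \<le> t" "t \<le> 2 * e"
  shows "1 / (4 * e * (ln 8 - ln e)) \<le> - G' t"
proof -
  have t01: "0 < t" "t \<le> 1" using e t by auto
  have s: "0 < sin t" "sin t \<le> 1" using sin_pos_01 t01 by auto
  have st: "sin t \<le> 2 * e" using sin_x_le_x[of t] t01 t by auto
  have c: "1/2 \<le> cos t" using cos_ge_half t01 by auto
  have m: "sin t * (ln 8 - 1 * ln (sin t)) \<le> (2*e) * (ln 8 - 1 * ln (2*e))"
    by (rule tlog_mono[where B=1]) (use s st e ln8_ge1 in \<open>auto\<close>)
  have "ln (2*e) \<ge> ln e" using e by auto
  then have "(2*e) * (ln 8 - ln (2*e)) \<le> (2*e) * (ln 8 - ln e)"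
    using e by (intro mult_left_mono) auto
  then have m2: "sin t * (ln 8 - ln (sin t)) \<le> 2 * e * (ln 8 - ln e)"
    using m by simp
  have "ln (sin t) \<le> 0" using s by simp
  then have L: "0 < ln 8 - ln (sin t)" using ln8_pos by linarith
  have D: "0 < sin t * (ln 8 - ln (sin t))" using s L by simp
  have "1 / (4 * e * (ln 8 - ln e)) = (1/2) / (2 * e * (ln 8 - ln e))" by simp
  also have "\<dots> \<le> cos t / (2 * e * (ln 8 - ln e))"
    using c D m2 by (intro divide_right_mono) auto
  also have "\<dots> \<le> cos t / (sin t * (ln 8 - ln (sin t)))"
    using c D m2 by (intro divide_left_mono) (auto intro: mult_pos_pos)
  finally show ?thesis by (simp add: G'_def)
qed

definition fr :: "real \<Rightarrow> real" where
  "fr t = (if \<bar>cos t\<bar> \<noteq> 1 then ln (ln (8 / sqrt (1 - (cos t)\<^sup>2))) else 0)"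

lemma sph3: "sph p $ 3 = cos (snd p)"
  by (simp add: sph_def)

lemma DFS_fr:
  assumes "\<And>\<xi>. f \<xi> = (if \<bar>\<xi> $ 3\<bar> \<noteq> 1
                      then complex_of_real (ln (ln (8 / sqrt (1 - (\<xi> $ 3)\<^sup>2)))) else 0)"
  shows "DFS f p = complex_of_real (fr (snd p))"
  by (simp add: DFS_def assms sph3 fr_def)

lemma sqrt_1_minus_cos: "0 \<le> sin t \<Longrightarrow> sqrt (1 - (cos t)\<^sup>2) = sin t"
  by (metis sin_cos_sqrt)

lemma fr_G: assumes "0 < t" "t \<le> 1" shows "fr t = G t"
proof -
  have s: "0 < sin t" "sin t \<le> 1" using sin_pos_01 assms by auto
  have "\<bar>cos t\<bar> \<noteq> 1"
  proof
    assume "\<bar>cos t\<bar> = 1"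
    then have "(cos t)\<^sup>2 = 1" by (metis abs_power2 power2_eq_1_iff power2_abs)
    then have "sin t ^ 2 = 0" using sin_cos_squared_add[of t] by simp
    then show False using s by simp
  qed
  then show ?thesis using s
    by (simp add: fr_def G_def sqrt_1_minus_cos ln_div)
qed

lemma G_cont: "0 < e \<Longrightarrow> 2 * e \<le> 1 \<Longrightarrow> continuous_on {e..2*e} G"
  by (rule continuous_at_imp_continuous_on) (auto intro!: DERIV_isCont G_DERIV)

lemma G'_cont: assumes "0 < e" "2 * e \<le> 1" shows "continuous_on {e..2*e} G'"
proof (rule continuous_at_imp_continuous_on, rule ballI)
  fix t assume t: "t \<in> {e..2*e}"
  then have s: "0 < sin t" "sin t \<le> 1" using sin_pos_01 assms by auto
  then have "ln (sin t) \<le> 0" by simp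
  then have L: "0 < ln 8 - ln (sin t)" using ln8_pos by linarith
  show "isCont G' t" unfolding G'_def
    using s L by (intro continuous_intros) auto
qed

lemma deriv_beps_cont: "continuous_on A (deriv (beps e))"
  by (intro smooth1_cont smooth1_deriv smooth1_beps)

lemma beps_lower: assumes "0 < e" "5*e/4 \<le> t" "t \<le> 7*e/4" shows "exp (-8) \<le> beps e t"
  unfolding beps_def using assms by (intro bump_lower) (auto simp: field_simps)

lemma beps_nonneg: "0 \<le> beps e t" and beps_le1: "beps e t \<le> 1"
  unfolding beps_def using bump_nonneg bump_le1 by auto

lemma J_lower:
  assumes e: "0 < e" "2 * e \<le> 1"
  shows "exp (-8) / (8 * (ln 8 - ln e)) \<le> integral {e..2*e} (\<lambda>t. G t * deriv (beps e) t)"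
proof -
  let ?I = "{e..2*e}"
  have cG: "continuous_on ?I G" using G_cont e by auto
  have cG': "continuous_on ?I G'" using G'_cont e by auto
  have cb: "continuous_on ?I (beps e)" by (intro smooth1_cont smooth1_beps)
  have cdb: "continuous_on ?I (deriv (beps e))" by (rule deriv_beps_cont)
  have ftc: "((\<lambda>t. G' t * beps e t + G t * deriv (beps e) t) has_integral
      (G (2*e) * beps e (2*e) - G e * beps e e)) ?I"
  proof (rule fundamental_theorem_of_calculus)
    show "e \<le> 2*e" using e by auto
    fix t assume t: "t \<in> ?I"
    then have "0 < t" "t \<le> 1" using e by auto
    then have "((\<lambda>t. G t * beps e t) has_real_derivative G' t * beps e t + G t * deriv (beps e) t) (at t)"
      using DERIV_mult[OF G_DERIV smooth1_DERIV[OF smooth1_beps], of t e] by (simp add: algebra_simps)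
    then show "((\<lambda>t. G t * beps e t) has_vector_derivative G' t * beps e t + G t * deriv (beps e) t) (at t within ?I)"
      by (simp add: has_real_derivative_iff_has_vector_derivative has_vector_derivative_at_within)
  qed
  have "beps e e = 0" "beps e (2*e) = 0" using e by (auto simp: beps_def bump_zero)
  then have ftc0: "((\<lambda>t. G' t * beps e t + G t * deriv (beps e) t) has_integral 0) ?I"
    using ftc by simp
  have i1: "(\<lambda>t. G' t * beps e t) integrable_on ?I"
    by (intro integrable_continuous_interval continuous_intros cG' cb)
  have "((\<lambda>t. (G' t * beps e t + G t * deriv (beps e) t) - G' t * beps e t) has_integral
      (0 - integral ?I (\<lambda>t. G' t * beps e t))) ?I"
    by (intro has_integral_diff ftc0 integrable_integral i1)
  note hd = this
  have Jeq: "integral ?I (\<lambda>t. G t * deriv (beps e) t) = integral ?I (\<lambda>t. - G' t * beps e t)"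
  proof -
    have "integral ?I (\<lambda>t. G t * deriv (beps e) t) = - integral ?I (\<lambda>t. G' t * beps e t)"
      using integral_unique[OF hd] by simp
    also have "\<dots> = integral ?I (\<lambda>t. - (G' t * beps e t))" by (simp add: integral_neg)
    finally show ?thesis by simp
  qed
  let ?c = "1 / (4 * e * (ln 8 - ln e)) * exp (-8)"
  have Lpos: "0 < ln 8 - ln e"
  proof -
    have "ln e < ln 8" using e by (subst ln_less_cancel_iff) auto
    then show ?thesis by simp
  qed
  have negG'pos: "0 \<le> - G' t" if "t \<in> ?I" for t
    using negG'_lower[OF e, of t] that Lpos e by (smt (verit) divide_pos_pos atLeastAtMost_iff mult_pos_pos)
  have i2: "(\<lambda>t. - G' t * beps e t) integrable_on S" if "S \<subseteq> ?I" "S = {a..b}" for S a b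
  proof -
    have "continuous_on S (\<lambda>t. - G' t * beps e t)"
      using that(1) by (intro continuous_intros continuous_on_subset[OF cG'] continuous_on_subset[OF cb])
    then show ?thesis using that(2) by (simp add: integrable_continuous_interval)
  qed
  have sub: "{5*e/4..7*e/4} \<subseteq> ?I" using e by auto
  have "integral {5*e/4..7*e/4} (\<lambda>t. ?c) \<le> integral {5*e/4..7*e/4} (\<lambda>t. - G' t * beps e t)"
  proof (rule integral_le)
    show "(\<lambda>t. - G' t * beps e t) integrable_on {5*e/4..7*e/4}" by (rule i2[OF sub refl])
    fix t assume t: "t \<in> {5*e/4..7*e/4}"
    then have "1 / (4 * e * (ln 8 - ln e)) \<le> - G' t" "exp (-8) \<le> beps e t"
      using negG'_lower[OF e, of t] beps_lower[OF e(1), of t] e by auto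
    then show "?c \<le> - G' t * beps e t"
      using Lpos e negG'pos[of t] sub t by (intro mult_mono) auto
  qed auto
  also have "\<dots> \<le> integral ?I (\<lambda>t. - G' t * beps e t)"
    by (rule integral_subset_le[OF sub i2[OF sub refl] i2[OF order_refl refl]])
       (use negG'pos beps_nonneg in \<open>auto intro!: mult_nonpos_nonneg\<close>)
  finally have A: "integral {5*e/4..7*e/4} (\<lambda>t. ?c) \<le> integral ?I (\<lambda>t. G t * deriv (beps e) t)"
    using Jeq by simp
  have "integral {5*e/4..7*e/4} (\<lambda>t. ?c) = ?c * (7*e/4 - 5*e/4)"
    using e by simp
  also have "\<dots> = exp (-8) / (8 * (ln 8 - ln e))"
    using e Lpos by (simp add: field_simps)
  finally show ?thesis using A by simp
qed

lemma Ib_lower: "exp (-8) / 2 \<le> integral {1..2} bump"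
proof -
  have cb: "continuous_on A bump" for A by (intro smooth1_cont smooth1_bump)
  have "integral {5/4..7/4::real} (\<lambda>t. exp (-8)) \<le> integral {5/4..7/4} bump"
    by (rule integral_le) (auto intro: integrable_continuous_interval cb bump_lower)
  also have "\<dots> \<le> integral {1..2} bump"
    by (rule integral_subset_le) (auto intro: integrable_continuous_interval cb bump_nonneg)
  finally show ?thesis by simp
qed

lemma amgm_bound:
  fixes x c :: real
  assumes "0 < c"
  shows "x \<le> c/2 * x\<^sup>2 + 1/(2*c)"
proof -
  have "0 \<le> (c*x - 1)\<^sup>2 / (2*c)" using assms by simp
  also have "(c*x - 1)\<^sup>2 / (2*c) = c/2 * x\<^sup>2 + 1/(2*c) - x"
    using assms by (simp add: field_simps power2_eq_square)
  finally show ?thesis by simp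
qed

lemma key_ineq:
  assumes f: "\<And>\<xi>. f \<xi> = (if \<bar>\<xi> $ 3\<bar> \<noteq> 1
                      then complex_of_real (ln (ln (8 / sqrt (1 - (\<xi> $ 3)\<^sup>2)))) else 0)"
    and wg: "weak_pd2 (DFS f) g"
    and intA: "integrable lborel (\<lambda>p. indicator ({-pi..pi} \<times> {-pi..pi}) p * (cmod (g p))\<^sup>2)"
    and e: "0 < e" "2 * e \<le> 1"
  shows "exp (-16) / (16 * (ln 8 - ln e)) \<le>
         sqrt e / 2 * ((LINT p|lborel. indicator ({-pi..pi} \<times> {-pi..pi}) p * (cmod (g p))\<^sup>2) + 1)"
proof -
  define A where "A = (LINT p|lborel. indicator ({-pi..pi} \<times> {-pi..pi}) p * (cmod (g p))\<^sup>2)"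
  define u where "u = tp bump (beps e)"
  have tu: "test_fun u" using test_fun_tp e u_def by auto
  have eqn: "(LINT p|lborel. DFS f p * pd2 u p) = - (LINT p|lborel. g p * u p)"
    using wg tu unfolding weak_pd2_def by blast
  define b where "b t = fr t * deriv (beps e) t" for t
  have Lpos: "0 < ln 8 - ln e"
  proof -
    have "ln e < ln 8" using e by (subst ln_less_cancel_iff) auto
    then show ?thesis by simp
  qed
  have hb: "continuous_on {e..2*e} (\<lambda>t. G t * deriv (beps e) t)"
    by (intro continuous_intros G_cont e deriv_beps_cont)
  have bint: "integrable lborel b" "(LINT t|lborel. b t) = integral {e..2*e} (\<lambda>t. G t * deriv (beps e) t)"
    by (rule compact_support_integral[OF hb]; use deriv_beps_zero[OF e(1)] fr_G e in \<open>auto simp: b_def\<close>)+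
  have bu: "continuous_on {1..2} bump" by (intro smooth1_cont smooth1_bump)
  have buint: "integrable lborel bump" "(LINT t|lborel. bump t) = integral {1..2} bump"
    by (rule compact_support_integral[OF bu]; use bump_zero in auto)+
  have "DFS f p * pd2 u p = complex_of_real (bump (fst p) * b (snd p))" for p
    unfolding u_def pd2_tp[OF smooth1_beps] DFS_fr[OF f] by (simp add: tp_def b_def)
  then have "(LINT p|lborel. DFS f p * pd2 u p) = (LINT p|lborel. complex_of_real (bump (fst p) * b (snd p)))"
    by presburger
  also have "\<dots> = complex_of_real (LINT p|lborel. bump (fst p) * b (snd p))"
    by (rule integral_complex_of_real)
  also have "\<dots> = complex_of_real (integral {1..2} bump * integral {e..2*e} (\<lambda>t. G t * deriv (beps e) t))"
    using prod_integrable(2)[OF buint(1) bint(1)] buint(2) bint(2) by simp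
  finally have LHS: "(LINT p|lborel. DFS f p * pd2 u p) = complex_of_real (integral {1..2} bump * integral {e..2*e} (\<lambda>t. G t * deriv (beps e) t))" .
  have J: "exp (-8) / (8 * (ln 8 - ln e)) \<le> integral {e..2*e} (\<lambda>t. G t * deriv (beps e) t)"
    by (rule J_lower[OF e])
  have Ib: "exp (-8) / 2 \<le> integral {1..2} bump" by (rule Ib_lower)
  have "exp (-8) / 2 * (exp (-8) / (8 * (ln 8 - ln e))) \<le>
        integral {1..2} bump * integral {e..2*e} (\<lambda>t. G t * deriv (beps e) t)"
  proof (rule mult_mono[OF Ib J])
    show "0 \<le> integral {1..2} bump" using Ib exp_gt_zero[of "-8"] by linarith
    show "0 \<le> exp (-8) / (8 * (ln 8 - ln e))" using Lpos by simp
  qed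
  moreover have "exp (-8) / 2 * (exp (-8) / (8 * (ln 8 - ln e))) = exp (-16) / (16 * (ln 8 - ln e))"
    by (simp add: exp_add[symmetric] field_simps)
  ultimately have lower: "exp (-16) / (16 * (ln 8 - ln e)) \<le> cmod (LINT p|lborel. g p * u p)"
    using eqn LHS by (smt (verit) norm_minus_cancel norm_of_real)
  define box where "box = {1..2::real} \<times> {e..2*e}"
  define W where "W p = sqrt e / 2 * (indicator ({-pi..pi} \<times> {-pi..pi}) p * (cmod (g p))\<^sup>2)
                        + 1 / (2 * sqrt e) * (indicator {1..2} (fst p) * indicator {e..2*e} (snd p))" for p :: "real \<times> real"
  have ind1: "integrable lborel (indicator {1..2::real} :: real \<Rightarrow> real)"
    by simp
  have ind2: "integrable lborel (indicator {e..2*e} :: real \<Rightarrow> real)"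
    using e by (simp add: integrable_indicator_iff)
  have Wint: "integrable lborel W"
    unfolding W_def using intA prod_integrable(1)[OF ind1 ind2] by auto
  have Wval: "(LINT p|lborel. W p) = sqrt e / 2 * A + 1 / (2 * sqrt e) * (1 * e)"
    unfolding W_def A_def using intA prod_integrable[OF ind1 ind2] e by simp
  also have "\<dots> = sqrt e / 2 * (A + 1)"
  proof -
    have se: "sqrt e > 0" using e by simp
    have "1 / (2 * sqrt e) * (1 * (sqrt e * sqrt e)) = sqrt e / 2" using se by (simp add: field_simps)
    then have "1 / (2 * sqrt e) * (1 * e) = sqrt e / 2" using e by simp
    then show ?thesis by (simp add: algebra_simps)
  qed
  finally have Wval: "(LINT p|lborel. W p) = sqrt e / 2 * (A + 1)" .
  have pw: "norm (g p * u p) \<le> W p" for p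
  proof (cases "fst p \<in> {1..2} \<and> snd p \<in> {e..2*e}")
    case True
    then have cell: "p \<in> {-pi..pi} \<times> {-pi..pi}"
      using e pi_gt3 by (cases p) auto
    have "norm (u p) = \<bar>bump (fst p) * beps e (snd p)\<bar>"
      unfolding u_def tp_def by (rule norm_of_real)
    also have "\<dots> \<le> 1"
      using bump_nonneg bump_le1 beps_nonneg beps_le1
      by (simp add: abs_mult mult_le_one)
    finally have "norm (u p) \<le> 1" .
    then have "norm (g p * u p) \<le> norm (g p)"
      by (simp add: norm_mult mult_left_le)
    also have "\<dots> \<le> sqrt e / 2 * (cmod (g p))\<^sup>2 + 1 / (2 * sqrt e)"
      using e by (intro amgm_bound) auto
    also have "\<dots> = W p" using True cell by (simp add: W_def indicator_def)
    finally show ?thesis .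
  next
    case False
    then have "u p = 0"
      unfolding u_def tp_def using bump_zero beps_zero[OF e(1)] by auto
    moreover have "0 \<le> W p" unfolding W_def using e by auto
    ultimately show ?thesis by simp
  qed
  have "cmod (LINT p|lborel. g p * u p) \<le> (LINT p|lborel. norm (g p * u p))"
    by (rule integral_norm_bound)
  also have "\<dots> \<le> (LINT p|lborel. W p)"
    by (rule integral_mono'[OF Wint]) (use pw in \<open>auto intro: order_trans[OF norm_ge_zero]\<close>)
  finally have "cmod (LINT p|lborel. g p * u p) \<le> sqrt e / 2 * (A + 1)" using Wval by simp
  then show ?thesis using lower unfolding A_def by linarith
qed

lemma sqrt_ln_lim: "((\<lambda>e::real. sqrt e * (ln 8 - ln e)) \<longlongrightarrow> 0) (at_right 0)"
  by real_asymp

lemma torus_not: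
  assumes f: "\<And>\<xi>. f \<xi> = (if \<bar>\<xi> $ 3\<bar> \<noteq> 1
                      then complex_of_real (ln (ln (8 / sqrt (1 - (\<xi> $ 3)\<^sup>2)))) else 0)"
  shows "\<not> H1_torus (DFS f)"
proof
  assume "H1_torus (DFS f)"
  then obtain g where wg: "weak_pd2 (DFS f) g" and Lg: "torus_L2 g"
    unfolding H1_torus_def by blast
  have intA: "integrable lborel (\<lambda>p. indicator ({-pi..pi} \<times> {-pi..pi}) p * (cmod (g p))\<^sup>2)"
    using Lg unfolding torus_L2_def set_integrable_def by simp
  define A where "A = (LINT p|lborel. indicator ({-pi..pi} \<times> {-pi..pi}) p * (cmod (g p))\<^sup>2)"
  have A0: "0 \<le> A" unfolding A_def by (rule integral_nonneg_AE) auto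
  have "((\<lambda>e::real. sqrt e * (ln 8 - ln e) * (A + 1)) \<longlongrightarrow> 0 * (A + 1)) (at_right 0)"
    by (intro tendsto_mult sqrt_ln_lim tendsto_const)
  then have ev1: "eventually (\<lambda>e. sqrt e * (ln 8 - ln e) * (A + 1) < exp (-16) / 8) (at_right (0::real))"
    by (intro order_tendstoD) auto
  have ev2: "eventually (\<lambda>e::real. 0 < e \<and> 2 * e \<le> 1) (at_right 0)"
    unfolding eventually_at_right_field by (intro exI[of _ "1/2"]) auto
  obtain e where e: "0 < e" "2 * e \<le> 1" and lt: "sqrt e * (ln 8 - ln e) * (A + 1) < exp (-16) / 8"
  proof -
    from eventually_conj[OF ev1 ev2] obtain b where "0 < b" and
      b: "\<And>y. 0 < y \<Longrightarrow> y < b \<Longrightarrow> sqrt y * (ln 8 - ln y) * (A + 1) < exp (-16) / 8 \<and> 0 < y \<and> 2 * y \<le> 1"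
      unfolding eventually_at_right_field by auto
    have "0 < b/2" "b/2 < b" using \<open>0 < b\<close> by auto
    from b[OF this] show ?thesis using that[of "b/2"] by blast
  qed
  have Lpos: "0 < ln 8 - ln e"
  proof -
    have "ln e < ln 8" using e by (subst ln_less_cancel_iff) auto
    then show ?thesis by simp
  qed
  have "exp (-16) / (16 * (ln 8 - ln e)) \<le> sqrt e / 2 * (A + 1)"
    using key_ineq[OF f wg intA e] A_def by simp
  then have "exp (-16) \<le> sqrt e / 2 * (A + 1) * (16 * (ln 8 - ln e))"
    using Lpos by (simp add: divide_le_eq)
  also have "\<dots> = 8 * (sqrt e * (ln 8 - ln e) * (A + 1))" by (simp add: field_simps)
  finally show False using lt by simp
qed

lemma ln8_ge2: "2 \<le> ln (8::real)"
proof -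
  have "exp 1 < (272/100::real)" by (rule e_less_272)
  then have "exp 1 * exp 1 < (272/100::real) * (272/100)"
    by (intro mult_strict_mono) auto
  then have "exp (2::real) \<le> 8" by (simp add: exp_add[symmetric])
  then have "ln (exp 2) \<le> ln (8::real)" by (subst ln_le_cancel_iff) auto
  then show ?thesis by simp
qed

definition L1 :: "real \<Rightarrow> real" where "L1 x = ln 8 - ln x / 2"
definition Hd :: "real \<Rightarrow> real \<Rightarrow> real" where "Hd d t = ln (L1 (1 - t\<^sup>2 + d))"
definition Hd' :: "real \<Rightarrow> real \<Rightarrow> real" where "Hd' d t = t / ((1 - t\<^sup>2 + d) * L1 (1 - t\<^sup>2 + d))"
definition dd :: "nat \<Rightarrow> real" where "dd n = 1 / (real n + 2)"

lemma dd_pos: "0 < dd n" and dd_le: "dd n \<le> 1/2"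
  by (auto simp: dd_def field_simps)

lemma dd_lim: "dd \<longlonglongrightarrow> 0"
  unfolding dd_def by real_asymp

lemma L1_ge1: assumes "0 < x" "x \<le> 2" shows "1 \<le> L1 x"
proof -
  have "ln x \<le> x - 1" using assms ln_le_minus_one by auto
  then show ?thesis using ln8_ge2 assms by (simp add: L1_def)
qed

lemma alg_helper: "1 / (L::real) * (0 - (1 / s * (- 2 * t)) / 2) = t / (s * L)"
  by simp

lemma Hd_DERIV:
  assumes "0 < 1 - t\<^sup>2 + d" "1 - t\<^sup>2 + d \<le> 2"
  shows "(Hd d has_real_derivative Hd' d t) (at t)"
proof -
  let ?s = "1 - t\<^sup>2 + d"
  have L: "1 \<le> L1 ?s" by (rule L1_ge1[OF assms])
  have d1: "((\<lambda>t. 1 - t\<^sup>2 + d) has_real_derivative - 2 * t) (at t)"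
    by (auto intro!: derivative_eq_intros)
  have d3: "((\<lambda>t. ln (1 - t\<^sup>2 + d)) has_real_derivative (1 / ?s * (- 2 * t))) (at t)"
    using DERIV_chain2[OF DERIV_ln d1] assms by (simp add: divide_inverse)
  have d2: "((\<lambda>t. L1 (1 - t\<^sup>2 + d)) has_real_derivative (0 - (1 / ?s * (- 2 * t)) / 2)) (at t)"
    unfolding L1_def by (intro DERIV_diff DERIV_const DERIV_cdivide d3)
  have "(Hd d has_real_derivative (1 / L1 ?s) * (0 - (1 / ?s * (- 2 * t)) / 2)) (at t)"
  proof -
    have L0: "0 < L1 ?s" using L by linarith
    have e: "Hd d = (\<lambda>x. ln (L1 (1 - x\<^sup>2 + d)))" by (rule ext) (simp only: Hd_def)
    from DERIV_chain2[OF DERIV_ln[OF L0] d2] show ?thesis unfolding e by (simp only: inverse_eq_divide)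
  qed
  moreover have "(1 / L1 ?s) * (0 - (1 / ?s * (- 2 * t)) / 2) = Hd' d t"
  proof -
    show ?thesis unfolding Hd'_def by (rule alg_helper)
  qed
  ultimately show ?thesis by simp
qed

definition Dn :: "nat \<Rightarrow> real \<Rightarrow> real" where "Dn n t = Hd' (dd n) (cos t) * sin t"
definition D0 :: "real \<Rightarrow> real" where "D0 t = Hd' 0 (cos t) * sin t"

lemma one_minus_cos2: "1 - (cos t)\<^sup>2 = (sin (t::real))\<^sup>2"
  by (simp add: sin_squared_eq)

lemma ln_sin2: "0 < sin (t::real) \<Longrightarrow> ln ((sin t)\<^sup>2) / 2 = ln (sin t)"
  by (simp add: ln_realpow)

lemma sin_pos_0pi: "0 < t \<Longrightarrow> t < pi \<Longrightarrow> 0 < sin t"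
  by (rule sin_gt_zero)

lemma D0_formula: assumes "0 < t" "t < pi"
  shows "D0 t = cos t / (sin t * (ln 8 - ln (sin t)))"
proof -
  have s: "0 < sin t" using sin_pos_0pi assms by auto
  have L: "L1 ((sin t)\<^sup>2) = ln 8 - ln (sin t)" using ln_sin2[OF s] by (simp add: L1_def)
  have "D0 t = cos t / ((sin t)\<^sup>2 * L1 ((sin t)\<^sup>2)) * sin t"
    by (simp add: D0_def Hd'_def one_minus_cos2)
  also have "\<dots> = cos t / ((sin t)\<^sup>2 * (ln 8 - ln (sin t))) * sin t" using L by simp
  also have "\<dots> = cos t / (sin t * (ln 8 - ln (sin t)))"
  proof -
    have "ln (sin t) \<le> 0" using s sin_le_one[of t] by simp
    then have K: "0 < ln 8 - ln (sin t)" using ln8_ge2 by linarith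
    show ?thesis using s K by (simp add: power2_eq_square field_simps)
  qed
  finally show ?thesis .
qed

lemma Dn_bound: assumes "0 \<le> t" "t \<le> pi" shows "\<bar>Dn n t\<bar> \<le> \<bar>D0 t\<bar>"
proof (cases "sin t = 0")
  case True then show ?thesis by (simp add: Dn_def D0_def)
next
  case False
  then have s: "0 < sin t" using sin_ge_zero assms by (metis less_eq_real_def)
  let ?a = "(sin t)\<^sup>2" and ?b = "(sin t)\<^sup>2 + dd n"
  have a0: "0 < ?a" using s by simp
  have a1: "?a \<le> 1" using s by (simp add: abs_square_le_1)
  have ab: "?a \<le> ?b" "?b \<le> 2" using dd_pos[of n] dd_le[of n] a1 by auto
  have "ln 2 \<le> (1::real)" using ln_le_minus_one[of 2] by simp
  then have cond: "1/2 * ln 2 + 1/2 \<le> ln (8::real)" using ln8_ge2 by linarith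
  have m: "?a * (ln 8 - 1/2 * ln ?a) \<le> ?b * (ln 8 - 1/2 * ln ?b)"
    by (rule tlog_mono[OF a0 ab(1) ab(2)]) (use cond in auto)
  have b0: "0 < ?b" using a0 dd_pos[of n] by linarith
  have La: "1 \<le> L1 ?a" "1 \<le> L1 ?b" using L1_ge1 a0 b0 ab by auto
  have m': "?a * L1 ?a \<le> ?b * L1 ?b" using m by (simp add: L1_def)
  have pa: "0 < ?a * L1 ?a" using a0 La by simp
  have "\<bar>Dn n t\<bar> = \<bar>cos t\<bar> * sin t / (?b * L1 ?b)"
    using s La ab by (simp add: Dn_def Hd'_def one_minus_cos2 abs_mult)
  also have "\<dots> \<le> \<bar>cos t\<bar> * sin t / (?a * L1 ?a)"
    using pa m' s by (intro divide_left_mono) auto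
  also have "\<dots> = \<bar>D0 t\<bar>"
    using s La by (simp add: D0_def Hd'_def one_minus_cos2 abs_mult)
  finally show ?thesis .
qed

lemma Dn_lim: "(\<lambda>n. Dn n t) \<longlonglongrightarrow> D0 t"
proof (cases "sin t = 0")
  case True then show ?thesis by (simp add: Dn_def D0_def)
next
  case False
  then have a0: "0 < (sin t)\<^sup>2" by simp
  have a1: "(sin t)\<^sup>2 \<le> 1" by (simp add: abs_square_le_1)
  have L: "1 \<le> L1 ((sin t)\<^sup>2)" using L1_ge1 a0 a1 by auto
  have "(\<lambda>n. cos t / (((sin t)\<^sup>2 + dd n) * (ln 8 - ln ((sin t)\<^sup>2 + dd n) / 2)) * sin t)
      \<longlonglongrightarrow> cos t / (((sin t)\<^sup>2 + 0) * (ln 8 - ln ((sin t)\<^sup>2 + 0) / 2)) * sin t"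
    using a0 L unfolding L1_def
    by (intro tendsto_intros dd_lim) auto
  then show ?thesis by (simp add: Dn_def D0_def Hd'_def L1_def one_minus_cos2)
qed

definition Kx :: "real \<Rightarrow> real" where "Kx t = ln 8 - ln (sin t)"

lemma Kx_ge2: "0 < sin t \<Longrightarrow> 2 \<le> Kx t"
proof -
  assume s: "0 < sin t"
  have "ln (sin t) \<le> 0" using s sin_le_one[of t] by simp
  then show ?thesis using ln8_ge2 by (simp add: Kx_def)
qed

lemma cos_neg_half: "pi/2 < x \<Longrightarrow> x < pi \<Longrightarrow> cos x < 0"
  using cos_gt_zero[of "pi - x"] by (simp add: cos_diff)

definition h1 :: "real \<Rightarrow> real" where "h1 t = cos t / (sin t * (Kx t)\<^sup>2)"
definition F1 :: "real \<Rightarrow> real" where "F1 t = 1 / Kx t"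

lemma F1_DERIV: assumes "0 < sin t" shows "(F1 has_real_derivative h1 t) (at t)"
proof -
  have K: "2 \<le> Kx t" using Kx_ge2 assms by auto
  have dK: "(Kx has_real_derivative (0 - inverse (sin t) * cos t)) (at t)"
    unfolding Kx_def[abs_def]
    by (intro DERIV_diff DERIV_const DERIV_chain2[OF DERIV_ln[OF assms] DERIV_sin])
  have "(F1 has_real_derivative - (0 - inverse (sin t) * cos t) / (Kx t)\<^sup>2) (at t)"
  proof -
    have "((\<lambda>t. 1 / Kx t) has_real_derivative - (0 - inverse (sin t) * cos t) / (Kx t)\<^sup>2) (at t)"
      using DERIV_inverse_fun[OF dK] K by (simp add: divide_inverse power2_eq_square mult_ac)
    then show ?thesis unfolding F1_def[abs_def] .
  qed
  moreover have "- (0 - inverse (sin t) * cos t) / (Kx t)\<^sup>2 = h1 t"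
    unfolding h1_def by (simp add: divide_inverse mult_ac)
  ultimately show ?thesis by simp
qed

lemma h1_cont: "0 < sin t \<Longrightarrow> isCont h1 t"
  unfolding h1_def Kx_def
  by (intro continuous_intros) (use Kx_ge2[of t] in \<open>auto simp: Kx_def\<close>)

lemma F1_cont: "0 < sin t \<Longrightarrow> isCont F1 t"
  unfolding F1_def Kx_def
  by (intro continuous_intros) (use Kx_ge2[of t] in \<open>auto simp: Kx_def\<close>)

lemma sin_pos_open: "0 < t \<Longrightarrow> t < pi \<Longrightarrow> 0 < sin t"
  by (rule sin_gt_zero)

lemma h1_int1: "set_integrable lborel {0<..<pi/2} h1"
proof -
  have "set_integrable lborel (einterval (ereal 0) (ereal (pi/2))) h1"
  proof (rule interval_integral_FTC_nonneg(1))
    show "ereal 0 < ereal (pi/2)" by simp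
    fix x assume x: "ereal 0 < ereal x" "ereal x < ereal (pi/2)"
    then have s: "0 < sin x" using sin_pos_open[of x] pi_gt3 by auto
    show "DERIV F1 x :> h1 x" by (rule F1_DERIV[OF s])
    show "isCont h1 x" by (rule h1_cont[OF s])
  next
    show "AE x in lborel. ereal 0 < ereal x \<longrightarrow> ereal x < ereal (pi / 2) \<longrightarrow> 0 \<le> h1 x"
    proof (rule AE_I2, intro impI)
      fix x assume x: "ereal 0 < ereal x" "ereal x < ereal (pi/2)"
      then have "0 \<le> cos x" using cos_ge_zero[of x] by auto
      then show "0 \<le> h1 x" unfolding h1_def using sin_pos_open[of x] x pi_gt3 by auto
    qed
    have "(F1 \<longlongrightarrow> 0) (at_right 0)"
      unfolding F1_def[abs_def] Kx_def by real_asymp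
    then show "((F1 \<circ> real_of_ereal) \<longlongrightarrow> 0) (at_right (ereal 0))"
      by (simp add: ereal_tendsto_simps1)
    have "(F1 \<longlongrightarrow> F1 (pi/2)) (at_left (pi/2))"
      using F1_cont[of "pi/2"] by (simp add: isCont_def filterlim_at_split)
    then show "((F1 \<circ> real_of_ereal) \<longlongrightarrow> F1 (pi/2)) (at_left (ereal (pi/2)))"
      by (simp add: ereal_tendsto_simps1)
  qed
  then show ?thesis by simp
qed

lemma h1_int2: "set_integrable lborel {pi/2<..<pi} (\<lambda>t. - h1 t)"
proof -
  have "set_integrable lborel (einterval (ereal (pi/2)) (ereal pi)) (\<lambda>t. - h1 t)"
  proof (rule interval_integral_FTC_nonneg(1))
    show "ereal (pi/2) < ereal pi" by simp
    fix x assume x: "ereal (pi/2) < ereal x" "ereal x < ereal pi"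
    then have s: "0 < sin x" using sin_pos_open[of x] pi_gt3 by auto
    show "DERIV (\<lambda>t. - F1 t) x :> - h1 x" by (intro DERIV_minus F1_DERIV[OF s])
    show "isCont (\<lambda>t. - h1 t) x" by (intro continuous_intros h1_cont[OF s])
  next
    show "AE x in lborel. ereal (pi/2) < ereal x \<longrightarrow> ereal x < ereal pi \<longrightarrow> 0 \<le> - h1 x"
    proof (rule AE_I2, intro impI)
      fix x assume x: "ereal (pi/2) < ereal x" "ereal x < ereal pi"
      then have "cos x \<le> 0" using cos_neg_half[of x] by auto
      moreover have "0 < sin x" using sin_pos_open[of x] x pi_gt3 by auto
      moreover then have "0 < sin x * (Kx x)\<^sup>2" using Kx_ge2[of x] by simp
      ultimately show "0 \<le> - h1 x" unfolding h1_def
        by (simp add: divide_nonpos_pos)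
    qed
    have "((\<lambda>t. - F1 t) \<longlongrightarrow> 0) (at_left pi)"
      unfolding F1_def[abs_def] Kx_def by real_asymp
    then show "(((\<lambda>t. - F1 t) \<circ> real_of_ereal) \<longlongrightarrow> 0) (at_left (ereal pi))"
      by (simp add: ereal_tendsto_simps1)
    have "((\<lambda>t. - F1 t) \<longlongrightarrow> - F1 (pi/2)) (at_right (pi/2))"
      using F1_cont[of "pi/2"] by (intro tendsto_minus) (simp add: isCont_def filterlim_at_split)
    then show "(((\<lambda>t. - F1 t) \<circ> real_of_ereal) \<longlongrightarrow> - F1 (pi/2)) (at_right (ereal (pi/2)))"
      by (simp add: ereal_tendsto_simps1)
  qed
  then show ?thesis by simp
qed

definition hh :: "real \<Rightarrow> real" where
  "hh t = indicator {0<..<pi/2} t * h1 t + indicator {pi/2<..<pi} t * (- h1 t)"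

lemma hh_int: "integrable lborel hh"
  using h1_int1 h1_int2 unfolding hh_def set_integrable_def by (intro Bochner_Integration.integrable_add) auto

lemma hh_nonneg: "0 \<le> hh t"
proof -
  have "0 \<le> indicator {0<..<pi/2} t * h1 t"
  proof (cases "t \<in> {0<..<pi/2}")
    case True
    then have "0 \<le> cos t" "0 < sin t" using cos_ge_zero[of t] sin_pos_open[of t] pi_gt3 by auto
    then show ?thesis using True Kx_ge2[of t] by (simp add: h1_def)
  qed simp
  moreover have "0 \<le> indicator {pi/2<..<pi} t * (- h1 t)"
  proof (cases "t \<in> {pi/2<..<pi}")
    case True
    then have c: "cos t \<le> 0" and s: "0 < sin t" using cos_neg_half[of t] sin_pos_open[of t] pi_gt3 by auto
    then have "0 < sin t * (Kx t)\<^sup>2" using Kx_ge2[of t] by simp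
    then show ?thesis using True c by (simp add: h1_def divide_nonpos_pos)
  qed simp
  ultimately show ?thesis by (simp add: hh_def)
qed

lemma D0_sq_le: assumes "0 \<le> t" "t \<le> pi" shows "(D0 t)\<^sup>2 * sin t \<le> hh t"
proof (cases "t = 0 \<or> t = pi \<or> t = pi/2")
  case True
  then have "(D0 t)\<^sup>2 * sin t = 0"
  proof (elim disjE)
    assume "t = pi/2"
    then have c: "cos t = 0" by (metis cos_pi_half)
    show ?thesis by (simp add: D0_def Hd'_def c)
  qed (simp_all add: D0_def Hd'_def)
  then show ?thesis using hh_nonneg[of t] by linarith
next
  case False
  then have t: "0 < t" "t < pi" "t \<noteq> pi/2" using assms by auto
  have s: "0 < sin t" using sin_pos_open t by auto
  have K: "2 \<le> Kx t" using Kx_ge2 s by auto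
  have D: "D0 t = cos t / (sin t * Kx t)" using D0_formula[OF t(1,2)] by (simp add: Kx_def)
  have "(D0 t)\<^sup>2 * sin t = (cos t)\<^sup>2 / (sin t * (Kx t)\<^sup>2)"
    using s K unfolding D by (simp add: power2_eq_square field_simps)
  also have "\<dots> \<le> \<bar>cos t\<bar> / (sin t * (Kx t)\<^sup>2)"
  proof (rule divide_right_mono)
    have "\<bar>cos t\<bar> \<le> 1" by simp
    then have "\<bar>cos t\<bar> * \<bar>cos t\<bar> \<le> \<bar>cos t\<bar>" by (intro mult_left_le) auto
    moreover have "(cos t)\<^sup>2 = \<bar>cos t\<bar> * \<bar>cos t\<bar>" by (simp add: power2_eq_square abs_mult[symmetric])
    ultimately show "(cos t)\<^sup>2 \<le> \<bar>cos t\<bar>" by linarith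
  qed (use s K in simp)
  also have "\<dots> = hh t"
  proof (cases "t < pi/2")
    case True
    then have "0 \<le> cos t" using cos_ge_zero[of t] t by auto
    then show ?thesis using True t by (simp add: hh_def h1_def)
  next
    case False
    then have "pi/2 < t" using t by auto
    then have "cos t < 0" using cos_neg_half[of t] t by auto
    then show ?thesis using False t \<open>pi/2 < t\<close> by (simp add: hh_def h1_def)
  qed
  finally show ?thesis .
qed

lemma fr_Hd: assumes "0 < t" "t < pi" shows "fr t = Hd 0 (cos t)"
proof -
  have s: "0 < sin t" using sin_pos_open assms by auto
  have "\<bar>cos t\<bar> \<noteq> 1"
  proof
    assume "\<bar>cos t\<bar> = 1"
    then have "(cos t)\<^sup>2 = 1" by (metis abs_power2 power2_eq_1_iff power2_abs)
    then have "sin t ^ 2 = 0" using sin_cos_squared_add[of t] by simp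
    then show False using s by simp
  qed
  then have "fr t = ln (ln (8 / sin t))"
    using s by (simp add: fr_def sqrt_1_minus_cos)
  also have "\<dots> = ln (ln 8 - ln (sin t))" using s by (simp add: ln_div)
  also have "\<dots> = Hd 0 (cos t)"
    using ln_sin2[OF s] by (simp add: Hd_def L1_def one_minus_cos2)
  finally show ?thesis .
qed

lemma Hd_sin: "Hd d (cos t) = ln (L1 ((sin t)\<^sup>2 + d))"
  by (simp add: Hd_def one_minus_cos2)

lemma Hd_bounds: assumes "0 < t" "t < pi"
  shows "0 \<le> Hd (dd n) (cos t)" "Hd (dd n) (cos t) \<le> Hd 0 (cos t)"
proof -
  have s: "0 < sin t" using sin_pos_open assms by auto
  have a0: "0 < (sin t)\<^sup>2" using s by simp
  have a1: "(sin t)\<^sup>2 \<le> 1" by (simp add: abs_square_le_1)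
  have b: "0 < (sin t)\<^sup>2 + dd n" "(sin t)\<^sup>2 + dd n \<le> 2" using a0 a1 dd_pos[of n] dd_le[of n] by linarith+
  have L: "1 \<le> L1 ((sin t)\<^sup>2 + dd n)" using L1_ge1[OF b] .
  then show "0 \<le> Hd (dd n) (cos t)" unfolding Hd_sin by simp
  have "ln ((sin t)\<^sup>2) \<le> ln ((sin t)\<^sup>2 + dd n)"
    using a0 add_pos_pos[OF a0 dd_pos[of n]] dd_pos[of n] by (subst ln_le_cancel_iff) auto
  then have "L1 ((sin t)\<^sup>2 + dd n) \<le> L1 ((sin t)\<^sup>2)" by (simp add: L1_def)
  then show "Hd (dd n) (cos t) \<le> Hd 0 (cos t)" unfolding Hd_sin using L by simp
qed

lemma Hd_lim: assumes "0 < t" "t < pi"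
  shows "(\<lambda>n. Hd (dd n) (cos t)) \<longlonglongrightarrow> Hd 0 (cos t)"
proof -
  have s: "0 < sin t" using sin_pos_open assms by auto
  have a0: "0 < (sin t)\<^sup>2" using s by simp
  have a1: "(sin t)\<^sup>2 \<le> 1" by (simp add: abs_square_le_1)
  have L: "1 \<le> L1 ((sin t)\<^sup>2 + 0)" using L1_ge1 a0 a1 by simp
  have "(\<lambda>n. ln (ln 8 - ln ((sin t)\<^sup>2 + dd n) / 2)) \<longlonglongrightarrow> ln (ln 8 - ln ((sin t)\<^sup>2 + 0) / 2)"
    using a0 L unfolding L1_def by (intro tendsto_intros dd_lim) auto
  then show ?thesis unfolding Hd_sin L1_def by simp
qed

lemma ln_le_2sqrt: assumes "0 < y" shows "ln y \<le> 2 * sqrt y"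
proof -
  have "ln (sqrt y) \<le> sqrt y - 1" using assms by (intro ln_le_minus_one) auto
  then show ?thesis using assms by (simp add: ln_sqrt)
qed

lemma fr_sq_bound: assumes "0 \<le> t" "t \<le> pi" shows "(fr t)\<^sup>2 * sin t \<le> 32"
proof (cases "t = 0 \<or> t = pi")
  case True then show ?thesis by auto
next
  case False
  then have t: "0 < t" "t < pi" using assms by auto
  have s: "0 < sin t" "sin t \<le> 1" using sin_pos_open t by auto
  define y where "y = ln 8 - ln (sin t)"
  have y2: "2 \<le> y" using Kx_ge2[OF s(1)] by (simp add: y_def Kx_def)
  have fr: "fr t = ln y" using fr_Hd[OF t] ln_sin2[OF s(1)]
    by (simp add: Hd_def L1_def one_minus_cos2 y_def)
  have ly0: "0 \<le> ln y" using y2 by simp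
  have "ln y \<le> 2 * sqrt y" using ln_le_2sqrt y2 by auto
  then have "(ln y)\<^sup>2 \<le> (2 * sqrt y)\<^sup>2" using ly0 by (intro power_mono) auto
  also have "\<dots> = 4 * y" using y2 by (simp add: power_mult_distrib)
  finally have A: "(fr t)\<^sup>2 \<le> 4 * y" using fr by simp
  have "y = ln (8 / sin t)" using s by (simp add: y_def ln_div)
  also have "\<dots> \<le> 8 / sin t - 1" using s by (intro ln_le_minus_one) auto
  finally have "y * sin t \<le> (8 / sin t - 1) * sin t" using s by (intro mult_right_mono) auto
  also have "\<dots> \<le> 8" using s by (simp add: field_simps)
  finally have B: "y * sin t \<le> 8" .
  have "(fr t)\<^sup>2 * sin t \<le> 4 * y * sin t" using A s by (intro mult_right_mono) auto
  also have "\<dots> \<le> 32" using B by linarith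
  finally show ?thesis .
qed

lemma sph_comp: "sph p $ 1 = cos (fst p) * sin (snd p)" "sph p $ 2 = sin (fst p) * sin (snd p)"
  "sph p $ 3 = cos (snd p)"
  by (simp_all add: sph_def)

lemma sph_inner: "sph p \<bullet> sph p = 1"
proof -
  have "sph p \<bullet> sph p = (cos (fst p) * sin (snd p))\<^sup>2 + (sin (fst p) * sin (snd p))\<^sup>2 + (cos (snd p))\<^sup>2"
    by (simp add: inner_vec_def sum_3 sph_comp power2_eq_square)
  also have "\<dots> = ((cos (fst p))\<^sup>2 + (sin (fst p))\<^sup>2) * (sin (snd p))\<^sup>2 + (cos (snd p))\<^sup>2"
    by (simp only: distrib_right power_mult_distrib)
  also have "\<dots> = 1" by (simp only: sin_cos_squared_add2 mult_1 sin_cos_squared_add)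
  finally show ?thesis .
qed

lemma norm_sph: "norm (sph p) = 1"
  using sph_inner by (simp add: norm_eq_sqrt_inner)

lemma phi_deriv:
  fixes \<xi> :: "real^3"
  assumes "norm \<xi> = 1"
  shows "((\<lambda>x. x $ 3 / norm x) has_derivative (\<lambda>h. h $ 3 - \<xi> $ 3 * (h \<bullet> \<xi>))) (at \<xi>)"
proof -
  have n0: "\<xi> \<noteq> 0" using assms by auto
  have d1: "((\<lambda>x::real^3. x $ 3) has_derivative (\<lambda>h. h $ 3)) (at \<xi>)"
    by (rule bounded_linear_imp_has_derivative) (rule bounded_linear_vec_nth)
  have d2: "(norm has_derivative (\<lambda>h. h \<bullet> sgn \<xi>)) (at \<xi>)"
    by (rule has_derivative_norm[OF n0])
  have "sgn \<xi> = \<xi>" using assms by (simp add: sgn_div_norm)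
  then have "((\<lambda>x. x $ 3 / norm x) has_derivative
     (\<lambda>h. - \<xi> $ 3 * (inverse (norm \<xi>) * (h \<bullet> \<xi>) * inverse (norm \<xi>)) + h $ 3 / norm \<xi>)) (at \<xi>)"
    using has_derivative_divide[OF d1 d2] assms by simp
  then show ?thesis using assms by (simp add: algebra_simps)
qed

lemma radial_ext_k: "radial_ext (\<lambda>x. complex_of_real (k (x $ 3))) = (\<lambda>x. complex_of_real (k (x $ 3 / norm x)))"
  by (rule ext) (simp add: radial_ext_def divide_inverse_commute)

lemma sgrad_k:
  fixes k :: "real \<Rightarrow> real" and \<xi> :: "real^3"
  assumes k: "(k has_real_derivative k') (at (\<xi> $ 3))" and n: "norm \<xi> = 1"
  shows "sgrad (\<lambda>x. complex_of_real (k (x $ 3))) i \<xi> =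
         complex_of_real (k' * ((axis i 1 :: real^3) $ 3 - \<xi> $ 3 * \<xi> $ i))"
proof -
  have k': "(k has_derivative (*) k') (at (\<xi> $ 3 / norm \<xi>))"
    using k n by (simp add: has_field_derivative_def)
  have "((k \<circ> (\<lambda>x. x $ 3 / norm x)) has_derivative ((*) k' \<circ> (\<lambda>h. h $ 3 - \<xi> $ 3 * (h \<bullet> \<xi>)))) (at \<xi>)"
    by (rule diff_chain_at[OF phi_deriv[OF n] k'])
  then have X: "((\<lambda>x. k (x $ 3 / norm x)) has_derivative (\<lambda>h. k' * (h $ 3 - \<xi> $ 3 * (h \<bullet> \<xi>)))) (at \<xi>)"
    unfolding o_def .
  have "((\<lambda>x. complex_of_real (k (x $ 3 / norm x))) has_derivative
      (\<lambda>h. complex_of_real (k' * (h $ 3 - \<xi> $ 3 * (h \<bullet> \<xi>))))) (at \<xi>)"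
    by (rule has_derivative_of_real[OF X])
  then have "frechet_derivative (radial_ext (\<lambda>x. complex_of_real (k (x $ 3)))) (at \<xi>) =
      (\<lambda>h. complex_of_real (k' * (h $ 3 - \<xi> $ 3 * (h \<bullet> \<xi>))))"
    unfolding radial_ext_k by (rule frechet_derivative_at[symmetric])
  then show ?thesis
    unfolding sgrad_def by (simp add: inner_commute[of "axis i 1"] inner_axis)
qed

definition fs :: "nat \<Rightarrow> real^3 \<Rightarrow> complex" where
  "fs n \<xi> = complex_of_real (Hd (dd n) (\<xi> $ 3))"

lemma Hd_DERIV_dd: assumes "t\<^sup>2 \<le> 1 + dd n"  "t\<^sup>2 < 1 + dd n"
  shows "(Hd (dd n) has_real_derivative Hd' (dd n) t) (at t)"
proof (rule Hd_DERIV)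
  show "0 < 1 - t\<^sup>2 + dd n" using assms by linarith
  show "1 - t\<^sup>2 + dd n \<le> 2" using dd_le[of n] zero_le_power2[of t] by linarith
qed

lemma L1_pos_dd: "t\<^sup>2 < 1 + dd n \<Longrightarrow> 0 < L1 (1 - t\<^sup>2 + dd n)"
  using L1_ge1[of "1 - t\<^sup>2 + dd n"] dd_le[of n] zero_le_power2[of t] by auto

lemma C1_sphere_fs: "C1_sphere (fs n)"
  unfolding C1_sphere_def
proof (intro exI conjI ballI allI)
  let ?U = "{x::real^3. (x $ 3)\<^sup>2 < 1 + dd n}"
  show "open ?U"
    by (rule open_Collect_less) (intro continuous_intros)+
  show "sphere 0 1 \<subseteq> ?U"
  proof
    fix x :: "real^3" assume "x \<in> sphere 0 1"
    then have "norm x = 1" by simp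
    then have "\<bar>x $ 3\<bar> \<le> 1" using component_le_norm_cart[of x 3] by simp
    then have "(x $ 3)\<^sup>2 \<le> 1" by (simp add: abs_square_le_1)
    then show "x \<in> ?U" using dd_pos[of n] by simp
  qed
  fix x :: "real^3" assume x: "x \<in> ?U"
  then have t: "(x $ 3)\<^sup>2 < 1 + dd n" by simp
  have d1: "((\<lambda>x::real^3. x $ 3) has_derivative (\<lambda>h. h $ 3)) (at x)"
    by (rule bounded_linear_imp_has_derivative) (rule bounded_linear_vec_nth)
  have k: "(Hd (dd n) has_derivative (*) (Hd' (dd n) (x $ 3))) (at (x $ 3))"
    using Hd_DERIV_dd[of "x $ 3" n] t by (simp add: has_field_derivative_def)
  have "((Hd (dd n) \<circ> (\<lambda>x. x $ 3)) has_derivative ((*) (Hd' (dd n) (x $ 3)) \<circ> (\<lambda>h. h $ 3))) (at x)"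
    by (rule diff_chain_at[OF d1 k])
  then have X: "((\<lambda>x. Hd (dd n) (x $ 3)) has_derivative (\<lambda>h. Hd' (dd n) (x $ 3) * h $ 3)) (at x)"
    unfolding o_def .
  show "(fs n has_derivative (\<lambda>h. complex_of_real (Hd' (dd n) (x $ 3) * h $ 3))) (at x)"
    unfolding fs_def[abs_def] by (rule has_derivative_of_real[OF X])
next
  fix v :: "real^3"
  let ?U = "{x::real^3. (x $ 3)\<^sup>2 < 1 + dd n}"
  have H: "(ln 8 * 2 = ln (1 - (x $ 3)\<^sup>2 + dd n)) = False" if t: "(x $ 3)\<^sup>2 < 1 + dd n" for x :: "real^3"
    using L1_pos_dd[OF t] t by (simp add: L1_def)
  show "continuous_on ?U (\<lambda>x. complex_of_real (Hd' (dd n) (x $ 3) * v $ 3))"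
    unfolding Hd'_def L1_def
    by (intro continuous_intros) (auto simp: H)
qed simp

abbreviation cell :: "(real \<times> real) set" where "cell \<equiv> {-pi..pi} \<times> {0..pi}"

lemma cell_integrable_cont:
  assumes "continuous_on cell q"
  shows "set_integrable lborel cell (q :: real \<times> real \<Rightarrow> real)"
  unfolding set_integrable_def
  by (rule borel_integrable_compact[OF _ assms]) (intro compact_Times compact_Icc)

lemma cos_sq_lt: "(cos t)\<^sup>2 < 1 + dd n"
proof -
  have "(cos t)\<^sup>2 \<le> 1" by (simp add: abs_square_le_1)
  then show ?thesis using dd_pos[of n] by linarith
qed

lemma sgrad_fs: "sgrad (fs n) i (sph p) =
   complex_of_real (Hd' (dd n) (cos (snd p)) * ((axis i 1 :: real^3) $ 3 - cos (snd p) * sph p $ i))"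
proof -
  have "(Hd (dd n) has_real_derivative Hd' (dd n) (sph p $ 3)) (at (sph p $ 3))"
    unfolding sph_comp by (rule Hd_DERIV_dd) (use cos_sq_lt[of "snd p" n] in auto)
  from sgrad_k[OF this norm_sph] show ?thesis
    unfolding fs_def[abs_def] sph_comp by simp
qed

lemma fs_diff: "(\<lambda>x. fs m x - fs n x) = (\<lambda>x. complex_of_real ((\<lambda>t. Hd (dd m) t - Hd (dd n) t) (x $ 3)))"
  by (rule ext) (simp add: fs_def)

lemma sgrad_fs_diff: "sgrad (\<lambda>x. fs m x - fs n x) i (sph p) =
   complex_of_real ((Hd' (dd m) (cos (snd p)) - Hd' (dd n) (cos (snd p))) * ((axis i 1 :: real^3) $ 3 - cos (snd p) * sph p $ i))"
proof -
  have "((\<lambda>t. Hd (dd m) t - Hd (dd n) t) has_real_derivative Hd' (dd m) (sph p $ 3) - Hd' (dd n) (sph p $ 3)) (at (sph p $ 3))"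
    unfolding sph_comp by (intro DERIV_diff Hd_DERIV_dd) (use cos_sq_lt[of "snd p"] less_imp_le[OF cos_sq_lt[of "snd p"]] in auto)
  from sgrad_k[OF this norm_sph] show ?thesis
    unfolding fs_diff sph_comp by simp
qed

lemma sph_i_cases: "sph p $ i = (if i = 1 then cos (fst p) * sin (snd p) else if i = 2 then sin (fst p) * sin (snd p) else cos (snd p))"
  using exhaust_3[of i] by (auto simp: sph_comp)

lemma cont_sph_i: "continuous_on A (\<lambda>p. sph p $ i)"
  unfolding sph_i_cases by (cases "i = 1"; cases "i = 2") (simp_all; intro continuous_intros)+

lemma axis_3: "(axis i 1 :: real^3) $ 3 = (if i = 3 then 1 else 0)"
  by (simp add: axis_def)

lemma ci_bound: assumes "0 \<le> sin (snd p)"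
  shows "\<bar>(axis i 1 :: real^3) $ 3 - cos (snd p) * sph p $ i\<bar> \<le> sin (snd p)"
proof -
  have c1: "\<bar>cos x\<bar> \<le> 1" for x :: real by simp
  consider "i = 1" | "i = 2" | "i = 3" using exhaust_3 by blast
  then show ?thesis
  proof cases
    case 1
    have "\<bar>cos (snd p) * cos (fst p)\<bar> \<le> 1" using c1 by (simp add: abs_mult mult_le_one)
    then have "\<bar>cos (snd p) * cos (fst p)\<bar> * sin (snd p) \<le> 1 * sin (snd p)"
      using assms by (intro mult_right_mono) auto
    then show ?thesis using 1 assms by (simp add: axis_3 sph_comp abs_mult)
  next
    case 2
    have "\<bar>cos (snd p) * sin (fst p)\<bar> \<le> 1" using c1 by (simp add: abs_mult mult_le_one)
    then have "\<bar>cos (snd p) * sin (fst p)\<bar> * sin (snd p) \<le> 1 * sin (snd p)"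
      using assms by (intro mult_right_mono) auto
    then show ?thesis using 2 assms by (simp add: axis_3 sph_comp abs_mult)
  next
    case 3
    have "1 - cos (snd p) * cos (snd p) = sin (snd p) * sin (snd p)"
      using one_minus_cos2[of "snd p"] by (simp add: power2_eq_square)
    moreover have "sin (snd p) * sin (snd p) \<le> sin (snd p)"
      using assms sin_le_one[of "snd p"] by (intro mult_left_le) auto
    ultimately show ?thesis using 3 assms by (simp add: axis_3 sph_comp)
  qed
qed

lemma isCont_Hd_dd: "t\<^sup>2 < 1 + dd n \<Longrightarrow> isCont (Hd (dd n)) t"
  by (rule DERIV_isCont[OF Hd_DERIV_dd]) auto

lemma isCont_Hd'_dd: assumes t: "t\<^sup>2 < 1 + dd n" shows "isCont (Hd' (dd n)) t"
proof -
  have l: "0 < ln 8 - ln (1 - t\<^sup>2 + dd n) / 2" using L1_pos_dd[OF t] by (simp add: L1_def)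
  show ?thesis unfolding Hd'_def[abs_def] L1_def
    using t l by (intro continuous_intros) auto
qed

lemma cont_Hd_cos: "continuous_on A (\<lambda>p::real\<times>real. Hd (dd n) (cos (snd p)))"
proof (rule continuous_at_imp_continuous_on, rule ballI)
  fix p :: "real \<times> real"
  have "isCont (\<lambda>p::real\<times>real. cos (snd p)) p" by (intro continuous_intros)
  from isCont_o2[OF this isCont_Hd_dd[OF cos_sq_lt]] show "isCont (\<lambda>p. Hd (dd n) (cos (snd p))) p" .
qed

lemma cont_Hd'_cos: "continuous_on A (\<lambda>p::real\<times>real. Hd' (dd n) (cos (snd p)))"
proof (rule continuous_at_imp_continuous_on, rule ballI)
  fix p :: "real \<times> real"
  have "isCont (\<lambda>p::real\<times>real. cos (snd p)) p" by (intro continuous_intros)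
  from isCont_o2[OF this isCont_Hd'_dd[OF cos_sq_lt]] show "isCont (\<lambda>p. Hd' (dd n) (cos (snd p))) p" .
qed

lemma sphere_L2_fs: "sphere_L2 (fs n)"
proof -
  have e: "(\<lambda>p. (cmod (fs n (sph p)))\<^sup>2 * sin (snd p)) = (\<lambda>p. (Hd (dd n) (cos (snd p)))\<^sup>2 * sin (snd p))"
    by (rule ext) (simp add: fs_def sph_comp)
  show ?thesis unfolding sphere_L2_def e
    by (rule cell_integrable_cont) (intro continuous_intros cont_Hd_cos)
qed

lemma sphere_L2_sgrad_fs: "sphere_L2 (sgrad (fs n) i)"
proof -
  have e: "(\<lambda>p. (cmod (sgrad (fs n) i (sph p)))\<^sup>2 * sin (snd p)) =
     (\<lambda>p. (Hd' (dd n) (cos (snd p)) * ((axis i 1 :: real^3) $ 3 - cos (snd p) * sph p $ i))\<^sup>2 * sin (snd p))"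
    by (rule ext) (simp only: sgrad_fs norm_of_real power2_abs)
  show ?thesis unfolding sphere_L2_def e
    by (rule cell_integrable_cont) (intro continuous_intros cont_Hd'_cos cont_sph_i)
qed

lemma C1_fin_fs: "C1_fin (fs n)"
  unfolding C1_fin_def using C1_sphere_fs sphere_L2_fs sphere_L2_sgrad_fs by blast

lemma snd_meas: "(g :: real \<Rightarrow> real) \<in> borel_measurable borel \<Longrightarrow> (\<lambda>p::real\<times>real. g (snd p)) \<in> borel_measurable lborel"
proof -
  assume g: "g \<in> borel_measurable borel"
  have "(snd :: real\<times>real \<Rightarrow> real) \<in> borel_measurable borel"
    by (intro borel_measurable_continuous_onI continuous_intros)
  then show ?thesis using measurable_compose[OF _ g] by (simp add: o_def)
qed

lemma cell_meas: "(indicator cell :: real\<times>real \<Rightarrow> real) \<in> borel_measurable lborel"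
  by (intro borel_measurable_indicator) (simp add: borel_closed closed_Times)

lemma cell_snd_meas: "(g :: real \<Rightarrow> real) \<in> borel_measurable borel \<Longrightarrow>
   (\<lambda>p::real\<times>real. indicator cell p * g (snd p)) \<in> borel_measurable lborel"
  using cell_meas snd_meas by measurable

lemma indicator_cell: "indicator cell p = indicator {-pi..pi} (fst p) * (indicator {0..pi} (snd p) :: real)"
  by (cases p) (simp add: indicator_def)

definition sn :: "nat \<Rightarrow> real \<times> real \<Rightarrow> real" where
  "sn n p = indicator cell p * ((Dn n (snd p) - D0 (snd p))\<^sup>2 * sin (snd p))"

definition wD :: "real \<times> real \<Rightarrow> real" where
  "wD p = indicator {-pi..pi} (fst p) * (4 * hh (snd p))"

lemma ind_pi_int: "integrable lborel (indicator {-pi..pi} :: real \<Rightarrow> real)"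
  by (simp add: integrable_indicator_iff)

lemma wD_int: "integrable lborel wD"
  unfolding wD_def by (rule prod_integrable(1)[OF ind_pi_int]) (use hh_int in simp)

lemma sn_meas: "sn n \<in> borel_measurable lborel"
proof -
  have "(\<lambda>t. (Dn n t - D0 t)\<^sup>2 * sin t) \<in> borel_measurable borel"
    unfolding Dn_def D0_def Hd'_def L1_def by measurable
  from cell_snd_meas[OF this] show ?thesis unfolding sn_def[abs_def] .
qed

lemma sn_bound: "norm (sn n p) \<le> wD p"
proof (cases "p \<in> cell")
  case True
  then have t: "0 \<le> snd p" "snd p \<le> pi" and l: "fst p \<in> {-pi..pi}" by (cases p; auto)+
  have s: "0 \<le> sin (snd p)" using sin_ge_zero t by auto
  have "(Dn n (snd p) - D0 (snd p))\<^sup>2 \<le> (\<bar>Dn n (snd p)\<bar> + \<bar>D0 (snd p)\<bar>)\<^sup>2"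
    by (rule power2_le_iff_abs_le[THEN iffD2]) (auto intro: abs_triangle_ineq4)
  also have "\<dots> \<le> (2 * \<bar>D0 (snd p)\<bar>)\<^sup>2"
    using Dn_bound[OF t] by (intro power_mono) auto
  also have "\<dots> = 4 * (D0 (snd p))\<^sup>2" by (simp add: power2_eq_square)
  finally have "(Dn n (snd p) - D0 (snd p))\<^sup>2 * sin (snd p) \<le> 4 * (D0 (snd p))\<^sup>2 * sin (snd p)"
    using s by (intro mult_right_mono) auto
  also have "\<dots> \<le> 4 * hh (snd p)" using D0_sq_le[OF t] by simp
  finally show ?thesis using True l s by (simp add: sn_def wD_def)
next
  case False
  then show ?thesis using hh_nonneg by (simp add: sn_def wD_def)
qed

lemma sn_lim: "(\<lambda>n. sn n p) \<longlonglongrightarrow> 0"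
proof -
  have "(\<lambda>n. indicator cell p * ((Dn n (snd p) - D0 (snd p))\<^sup>2 * sin (snd p)))
     \<longlonglongrightarrow> indicator cell p * ((D0 (snd p) - D0 (snd p))\<^sup>2 * sin (snd p))"
    by (intro tendsto_intros Dn_lim)
  then show ?thesis by (simp add: sn_def[abs_def])
qed

lemma sn_AE: "AE x in lborel. norm (sn i x) \<le> wD x"
  by (rule AE_I2) (rule sn_bound)

lemma sn_int: "integrable lborel (sn n)"
  by (rule integrable_dominated_convergence2[OF borel_measurable_const sn_meas wD_int AE_I2[OF sn_lim] sn_AE])

lemma sn_int_lim: "(\<lambda>n. LINT p|lborel. sn n p) \<longlonglongrightarrow> 0"
proof -
  show ?thesis
    using integral_dominated_convergence[OF borel_measurable_const sn_meas wD_int AE_I2[OF sn_lim] sn_AE] by simp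
qed

definition tr :: "nat \<Rightarrow> real \<Rightarrow> real" where
  "tr n t = (\<bar>Hd (dd n) (cos t) - fr t\<bar>)\<^sup>2 * sin t"

definition tn :: "nat \<Rightarrow> real \<times> real \<Rightarrow> real" where
  "tn n p = indicator cell p * tr n (snd p)"

definition w2 :: "real \<times> real \<Rightarrow> real" where
  "w2 p = indicator {-pi..pi} (fst p) * (indicator {0..pi} (snd p) * 32)"

lemma w2_int: "integrable lborel w2"
  unfolding w2_def by (rule prod_integrable(1)[OF ind_pi_int]) (simp add: integrable_indicator_iff)

lemma tn_meas: "tn n \<in> borel_measurable lborel"
proof -
  have "tr n \<in> borel_measurable borel"
    unfolding tr_def[abs_def] Hd_def fr_def L1_def by measurable
  from cell_snd_meas[OF this] show ?thesis unfolding tn_def[abs_def] .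
qed

lemma tr_bound: assumes "0 \<le> t" "t \<le> pi" shows "0 \<le> tr n t \<and> tr n t \<le> 32"
proof (cases "t = 0 \<or> t = pi")
  case True then show ?thesis by (auto simp: tr_def)
next
  case False
  then have t: "0 < t" "t < pi" using assms by auto
  have s: "0 \<le> sin t" using sin_ge_zero assms by auto
  have b: "0 \<le> Hd (dd n) (cos t)" "Hd (dd n) (cos t) \<le> fr t" using Hd_bounds[OF t, of n] fr_Hd[OF t] by auto
  then have "\<bar>Hd (dd n) (cos t) - fr t\<bar> \<le> \<bar>fr t\<bar>" by auto
  then have "(\<bar>Hd (dd n) (cos t) - fr t\<bar>)\<^sup>2 \<le> (fr t)\<^sup>2"
    by (metis abs_ge_zero power2_abs power_mono)
  then have "tr n t \<le> (fr t)\<^sup>2 * sin t" unfolding tr_def using s by (intro mult_right_mono) auto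
  also have "\<dots> \<le> 32" using fr_sq_bound assms by auto
  finally show ?thesis using s by (simp add: tr_def)
qed

lemma tn_bound: "norm (tn n p) \<le> w2 p"
proof (cases "p \<in> cell")
  case True
  then have t: "0 \<le> snd p" "snd p \<le> pi" and l: "fst p \<in> {-pi..pi}" by (cases p; auto)+
  have "indicator {0..pi} (snd p) = (1::real)" using t by simp
  then show ?thesis using tr_bound[OF t, of n] True l by (simp add: tn_def w2_def)
next
  case False
  then show ?thesis by (simp add: tn_def w2_def)
qed

lemma tn_AE: "AE x in lborel. norm (tn i x) \<le> w2 x"
  by (rule AE_I2) (rule tn_bound)

lemma tn_lim: "(\<lambda>n. tn n p) \<longlonglongrightarrow> 0"
proof (cases "p \<in> cell \<and> 0 < snd p \<and> snd p < pi")
  case True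
  then have t: "0 < snd p" "snd p < pi" by auto
  have "(\<lambda>n. indicator cell p * ((\<bar>Hd (dd n) (cos (snd p)) - fr (snd p)\<bar>)\<^sup>2 * sin (snd p)))
      \<longlonglongrightarrow> indicator cell p * ((\<bar>fr (snd p) - fr (snd p)\<bar>)\<^sup>2 * sin (snd p))"
    using Hd_lim[OF t] fr_Hd[OF t] by (intro tendsto_intros) auto
  then show ?thesis by (simp add: tn_def[abs_def] tr_def)
next
  case False
  then have "tn n p = 0" for n
  proof (cases "p \<in> cell")
    case True
    then have "snd p = 0 \<or> snd p = pi" using False by (cases p) auto
    then show ?thesis by (auto simp: tn_def tr_def)
  qed (simp add: tn_def)
  then show ?thesis by simp
qed

lemma tn_int: "integrable lborel (tn n)"
  by (rule integrable_dominated_convergence2[OF borel_measurable_const tn_meas w2_int AE_I2[OF tn_lim] tn_AE])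

lemma tn_int_lim: "(\<lambda>n. LINT p|lborel. tn n p) \<longlonglongrightarrow> 0"
  using integral_dominated_convergence[OF borel_measurable_const tn_meas w2_int AE_I2[OF tn_lim] tn_AE] by simp

lemma sq_tri_real: "((x::real) - y)\<^sup>2 \<le> 2 * (x - z)\<^sup>2 + 2 * (y - z)\<^sup>2"
proof -
  have "0 \<le> (x + y - 2 * z)\<^sup>2" by simp
  then show ?thesis by (simp add: power2_eq_square algebra_simps)
qed

lemma sq_tri_cmod: "(cmod (a - b))\<^sup>2 \<le> 2 * (cmod (a - c))\<^sup>2 + 2 * (cmod (b - c))\<^sup>2"
proof -
  have "cmod (a - b) \<le> cmod (a - c) + cmod (b - c)"
    using norm_triangle_ineq4[of "a - c" "b - c"] by simp
  then have "(cmod (a - b))\<^sup>2 \<le> (cmod (a - c) + cmod (b - c))\<^sup>2"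
    by (intro power_mono) auto
  also have "\<dots> \<le> 2 * (cmod (a - c))\<^sup>2 + 2 * (cmod (b - c))\<^sup>2"
    using sq_tri_real[of "cmod (a - c)" "- cmod (b - c)" 0] by simp
  finally show ?thesis .
qed

lemma sn_nonneg: "0 \<le> sn n p"
proof (cases "p \<in> cell")
  case True
  then have "0 \<le> sin (snd p)" using sin_ge_zero by (cases p) auto
  then show ?thesis using True by (simp add: sn_def)
qed (simp add: sn_def)

lemma tn_nonneg: "0 \<le> tn n p"
proof (cases "p \<in> cell")
  case True
  then have "0 \<le> sin (snd p)" using sin_ge_zero by (cases p) auto
  then show ?thesis using True by (simp add: tn_def tr_def)
qed (simp add: tn_def)

lemma fs_sph: "fs n (sph p) = complex_of_real (Hd (dd n) (cos (snd p)))"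
  by (simp add: fs_def sph_comp)

context
  fixes f :: "real^3 \<Rightarrow> complex"
  assumes f: "\<And>\<xi>. f \<xi> = (if \<bar>\<xi> $ 3\<bar> \<noteq> 1
                      then complex_of_real (ln (ln (8 / sqrt (1 - (\<xi> $ 3)\<^sup>2)))) else 0)"
begin

lemma f_sph: "f (sph p) = complex_of_real (fr (snd p))"
  using DFS_fr[OF f, of p] by (simp add: DFS_def)

lemma sphere_L2_f: "sphere_L2 f"
proof -
  have e: "(\<lambda>p. indicator cell p *\<^sub>R ((cmod (f (sph p)))\<^sup>2 * sin (snd p))) =
      (\<lambda>p. indicator cell p * ((fr (snd p))\<^sup>2 * sin (snd p)))"
    by (rule ext) (simp add: f_sph)
  have m: "(\<lambda>t. (fr t)\<^sup>2 * sin t) \<in> borel_measurable borel"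
    unfolding fr_def by measurable
  have "integrable lborel (\<lambda>p. indicator cell p * ((fr (snd p))\<^sup>2 * sin (snd p)))"
  proof (rule Bochner_Integration.integrable_bound[OF w2_int cell_snd_meas[OF m]], rule AE_I2)
    fix p :: "real \<times> real"
    show "norm (indicator cell p * ((fr (snd p))\<^sup>2 * sin (snd p))) \<le> norm (w2 p)"
    proof (cases "p \<in> cell")
      case True
      then have t: "0 \<le> snd p" "snd p \<le> pi" and l: "fst p \<in> {-pi..pi}" by (cases p; auto)+
      have "indicator {0..pi} (snd p) = (1::real)" using t by simp
      moreover have "0 \<le> sin (snd p)" using sin_ge_zero t by auto
      ultimately show ?thesis using fr_sq_bound[OF t] True l by (simp add: w2_def)
    next
      case False then show ?thesis by (simp add: w2_def)
    qed
  qed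
  then show ?thesis unfolding sphere_L2_def set_integrable_def e .
qed

lemma tn_f: "tn n p = indicator cell p * ((cmod (fs n (sph p) - f (sph p)))\<^sup>2 * sin (snd p))"
proof -
  have "cmod (fs n (sph p) - f (sph p)) = \<bar>Hd (dd n) (cos (snd p)) - fr (snd p)\<bar>"
    unfolding fs_sph f_sph by (simp flip: of_real_diff)
  then show ?thesis by (simp add: tn_def tr_def)
qed

lemma bn_eq: "sphere_L2sq (\<lambda>x. fs n x - f x) = (LINT p|lborel. tn n p)"
  unfolding sphere_L2sq_def set_lebesgue_integral_def by (simp add: tn_f)

lemma boundA: "sphere_L2sq (sgrad (\<lambda>x. fs m x - fs n x) i) \<le> 2 * (LINT p|lborel. sn m p) + 2 * (LINT p|lborel. sn n p)"
proof -
  have "sphere_L2sq (sgrad (\<lambda>x. fs m x - fs n x) i) =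
     (LINT p|lborel. indicator cell p * ((cmod (sgrad (\<lambda>x. fs m x - fs n x) i (sph p)))\<^sup>2 * sin (snd p)))"
    unfolding sphere_L2sq_def set_lebesgue_integral_def by simp
  also have "\<dots> \<le> (LINT p|lborel. 2 * sn m p + 2 * sn n p)"
  proof (rule integral_mono')
    show "integrable lborel (\<lambda>p. 2 * sn m p + 2 * sn n p)" using sn_int by auto
    fix p :: "real \<times> real"
    show "0 \<le> 2 * sn m p + 2 * sn n p" using sn_nonneg[of m p] sn_nonneg[of n p] by simp
    show "indicator cell p * ((cmod (sgrad (\<lambda>x. fs m x - fs n x) i (sph p)))\<^sup>2 * sin (snd p)) \<le> 2 * sn m p + 2 * sn n p"
    proof (cases "p \<in> cell")
      case True
      then have s: "0 \<le> sin (snd p)" using sin_ge_zero by (cases p) auto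
      let ?a = "Hd' (dd m) (cos (snd p)) - Hd' (dd n) (cos (snd p))"
      let ?c = "(axis i 1 :: real^3) $ 3 - cos (snd p) * sph p $ i"
      have "cmod (sgrad (\<lambda>x. fs m x - fs n x) i (sph p)) = \<bar>?a * ?c\<bar>"
        unfolding sgrad_fs_diff by (rule norm_of_real)
      also have "\<dots> \<le> \<bar>?a\<bar> * sin (snd p)"
        using ci_bound[OF s, of i] by (simp add: abs_mult mult_left_mono)
      finally have "(cmod (sgrad (\<lambda>x. fs m x - fs n x) i (sph p)))\<^sup>2 \<le> (\<bar>?a\<bar> * sin (snd p))\<^sup>2"
        by (intro power_mono) auto
      also have "\<dots> = (Dn m (snd p) - Dn n (snd p))\<^sup>2"
        unfolding Dn_def by (simp add: power2_eq_square algebra_simps)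
      also have "\<dots> \<le> 2 * (Dn m (snd p) - D0 (snd p))\<^sup>2 + 2 * (Dn n (snd p) - D0 (snd p))\<^sup>2"
        by (rule sq_tri_real)
      finally have "(cmod (sgrad (\<lambda>x. fs m x - fs n x) i (sph p)))\<^sup>2 * sin (snd p) \<le>
          (2 * (Dn m (snd p) - D0 (snd p))\<^sup>2 + 2 * (Dn n (snd p) - D0 (snd p))\<^sup>2) * sin (snd p)"
        using s by (intro mult_right_mono) auto
      then show ?thesis using True by (simp add: sn_def algebra_simps)
    next
      case False
      then show ?thesis by (simp add: sn_def)
    qed
  qed
  also have "\<dots> = 2 * (LINT p|lborel. sn m p) + 2 * (LINT p|lborel. sn n p)"
    using sn_int by simp
  finally show ?thesis .
qed

lemma boundB: "sphere_L2sq (\<lambda>x. fs m x - fs n x) \<le> 2 * (LINT p|lborel. tn m p) + 2 * (LINT p|lborel. tn n p)"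
proof -
  have "sphere_L2sq (\<lambda>x. fs m x - fs n x) =
     (LINT p|lborel. indicator cell p * ((cmod (fs m (sph p) - fs n (sph p)))\<^sup>2 * sin (snd p)))"
    unfolding sphere_L2sq_def set_lebesgue_integral_def by simp
  also have "\<dots> \<le> (LINT p|lborel. 2 * tn m p + 2 * tn n p)"
  proof (rule integral_mono')
    show "integrable lborel (\<lambda>p. 2 * tn m p + 2 * tn n p)" using tn_int by auto
    fix p :: "real \<times> real"
    show "0 \<le> 2 * tn m p + 2 * tn n p" using tn_nonneg[of m p] tn_nonneg[of n p] by simp
    show "indicator cell p * ((cmod (fs m (sph p) - fs n (sph p)))\<^sup>2 * sin (snd p)) \<le> 2 * tn m p + 2 * tn n p"
    proof (cases "p \<in> cell")
      case True
      then have s: "0 \<le> sin (snd p)" using sin_ge_zero by (cases p) auto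
      have "(cmod (fs m (sph p) - fs n (sph p)))\<^sup>2 * sin (snd p) \<le>
          (2 * (cmod (fs m (sph p) - f (sph p)))\<^sup>2 + 2 * (cmod (fs n (sph p) - f (sph p)))\<^sup>2) * sin (snd p)"
        using s by (intro mult_right_mono sq_tri_cmod) auto
      then show ?thesis using True by (simp add: tn_f algebra_simps)
    next
      case False
      then show ?thesis by (simp add: tn_f)
    qed
  qed
  also have "\<dots> = 2 * (LINT p|lborel. tn m p) + 2 * (LINT p|lborel. tn n p)"
    using tn_int by simp
  finally show ?thesis .
qed

lemma sphere_part: "H1_sphere f"
proof -
  have L: "(\<lambda>n. sphere_L2sq (\<lambda>x. fs n x - f x)) \<longlonglongrightarrow> 0"
    unfolding bn_eq by (rule tn_int_lim)
  have C: "\<forall>e>0. \<exists>N. \<forall>m\<ge>N. \<forall>n\<ge>N. H1_sphere_sq (\<lambda>x. fs m x - fs n x) < e"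
  proof (intro allI impI)
    fix e :: real assume e: "0 < e"
    define a where "a n = (LINT p|lborel. sn n p)" for n
    define b where "b n = (LINT p|lborel. tn n p)" for n
    have a0: "0 \<le> a n" for n unfolding a_def by (rule integral_nonneg_AE) (auto intro: sn_nonneg)
    have b0: "0 \<le> b n" for n unfolding b_def by (rule integral_nonneg_AE) (auto intro: tn_nonneg)
    have e13: "0 < e/13" using e by simp
    have "eventually (\<lambda>n. a n < e/13) sequentially"
      using order_tendstoD(2)[OF sn_int_lim[folded a_def[abs_def]] e13] .
    moreover have "eventually (\<lambda>n. b n < e/13) sequentially"
      using order_tendstoD(2)[OF tn_int_lim[folded b_def[abs_def]] e13] .
    ultimately obtain N where N: "\<And>n. N \<le> n \<Longrightarrow> a n < e/13 \<and> b n < e/13"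
      unfolding eventually_sequentially by (metis (no_types, lifting) eventually_conj eventually_sequentially)
    show "\<exists>N. \<forall>m\<ge>N. \<forall>n\<ge>N. H1_sphere_sq (\<lambda>x. fs m x - fs n x) < e"
    proof (intro exI[of _ N] allI impI)
      fix m n assume mn: "N \<le> m" "N \<le> n"
      have "(\<Sum>i\<in>UNIV. sphere_L2sq (sgrad (\<lambda>x. fs m x - fs n x) i)) \<le> of_nat (card (UNIV :: 3 set)) * (2 * a m + 2 * a n)"
        by (rule sum_bounded_above) (use boundA in \<open>simp add: a_def\<close>)
      also have "\<dots> = 3 * (2 * a m + 2 * a n)" by simp
      finally have S: "(\<Sum>i\<in>UNIV. sphere_L2sq (sgrad (\<lambda>x. fs m x - fs n x) i)) \<le> 3 * (2 * a m + 2 * a n)" .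
      have T: "sphere_L2sq (\<lambda>x. fs m x - fs n x) \<le> 2 * b m + 2 * b n"
        using boundB by (simp add: b_def)
      have "H1_sphere_sq (\<lambda>x. fs m x - fs n x) \<le> 3 * (2 * a m + 2 * a n) + 1/4 * (2 * b m + 2 * b n)"
        unfolding H1_sphere_sq_def using S T by (intro add_mono mult_left_mono) auto
      also have "\<dots> < e"
      proof -
        have "a m < e/13" "b m < e/13" "a n < e/13" "b n < e/13" using N[OF mn(1)] N[OF mn(2)] by auto
        then show ?thesis by argo
      qed
      finally show "H1_sphere_sq (\<lambda>x. fs m x - fs n x) < e" .
    qed
  qed
  show ?thesis unfolding H1_sphere_def using sphere_L2_f C1_fin_fs C L by blast
qed

end

theorem theorem6p3:
  fixes f :: "real^3 \<Rightarrow> complex"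
  assumes "\<And>\<xi>. f \<xi> = (if \<bar>\<xi> $ 3\<bar> \<noteq> 1
                      then complex_of_real (ln (ln (8 / sqrt (1 - (\<xi> $ 3)\<^sup>2)))) else 0)"
  shows "H1_sphere f \<and> \<not> H1_torus (DFS f)"
  using sphere_part[OF assms] torus_not[OF assms] by blast

end
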